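(* Let $n,k,s$ be positive integers with $2\le s\le\lfloor n/k\rfloor$, write $n=ds+s_0$ with $d=\lfloor n/s\rfloor$ and $s_0=n\bmod s$, and assume $s_0<\min\{d,s\}$. Under the repair-by-transfer model, every Fixed Cluster Repair System scheme with these parameters storing a file of entropy $M$ has repair bandwidth $$\gamma=d\beta\ \ge\ \gamma_{cc}(n,k,s):=\frac{M d^{s}}{\min\left\{d^{s+1}-\prod_{i=1}^{s+1}(d-k_i)\ :\ k_i\in\mathbb Z_{\ge0},\ \sum_{i=1}^{s+1}k_i=k,\ k_{s+1}\le s_0\right\}},$$ and the Cubic Code achieves $\gamma=\gamma_{cc}(n,k,s)$; i.e. Cubic Codes achieve the minimum repair bandwidth under repair-by-transfer for arbitrary such parameters.
   Context: FCRS: $n=ds+s_0$ servers in clusters $1,\dots,s$ of size $d$ and cluster $s+1$ of size $s_0$; server $(i,j)$, $(i,j)\in([s]\times[d])\cup(\{s+1\}\times[s_0])$, stores a random variable $X^{(i)}_j$, a function of the file $\mathcal M$ ($H(\mathcal M)=M$), with $H(X^{(i)}_j)\le\alpha$. Data recovery: any $k$ servers, from any clusters, determine $\mathcal M$. Exact repair: for every server $(r,\ell)$ and every repair cluster $i\in[s]$, $i\ne r$, each server $(i,j)$, $j\in[d]$, sends $Y^{(r,i)}_{\ell,j}$, a function of $X^{(i)}_j$ with $H(Y^{(r,i)}_{\ell,j})\le\beta$, and $X^{(r)}_\ell$ is a function of $Y^{(r,i)}_{\ell,[d]}=(Y^{(r,i)}_{\ell,1},\dots,Y^{(r,i)}_{\ell,d})$.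 Repair-by-transfer (in the broad sense used here): additionally $H(Y^{(r,i)}_{\ell,[d]}\mid X^{(r)}_\ell)=0$. Repair bandwidth $\gamma=d\beta$. Cubic Code: split the file into $m$ chunks of size $M/m$ and encode with a $(d^{s+1},m)$ MDS code whose symbols $C_b$ are indexed by strings $b=b_{s+1}\cdots b_1$, $b_i\in[d]$. Server $(i,j)$ stores $\{C_b:b_i=j\}$ (so $d^s$ symbols). To repair $(r,\ell)$ from cluster $i$, server $(i,j)$ sends $\{C_b:b_i=j,\ b_r=\ell\}$. Here $m=\min\{d^{s+1}-\prod_{i=1}^{s+1}(d-k_i):k_i\ge0,\ \sum k_i=k,\ k_{s+1}\le s_0\}$, so that any $k$ servers recover the file. *)

theory Defs
  imports "HOL-Probability.Probability" "HOL-Library.FuncSet"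
begin

definition ent :: "'f pmf \<Rightarrow> ('f \<Rightarrow> 'a) \<Rightarrow> real" where
  "ent P X = (\<Sum>x\<in>set_pmf (map_pmf X P).
      - (pmf (map_pmf X P) x * log 2 (pmf (map_pmf X P) x)))"

definition cond_ent :: "'f pmf \<Rightarrow> ('f \<Rightarrow> 'b) \<Rightarrow> ('f \<Rightarrow> 'a) \<Rightarrow> real" where
  "cond_ent P Y X = ent P (\<lambda>f. (X f, Y f)) - ent P X"

definition is_fun_of :: "'f pmf \<Rightarrow> ('f \<Rightarrow> 'a) \<Rightarrow> ('f \<Rightarrow> 'b) \<Rightarrow> bool" where
  "is_fun_of P X Z = (\<exists>g. \<forall>f\<in>set_pmf P. X f = g (Z f))"

definition fcrs_d :: "nat \<Rightarrow> nat \<Rightarrow> nat" where "fcrs_d n s = n div s"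
definition fcrs_s0 :: "nat \<Rightarrow> nat \<Rightarrow> nat" where "fcrs_s0 n s = n mod s"

definition servers :: "nat \<Rightarrow> nat \<Rightarrow> (nat \<times> nat) set" where
  "servers n s = ({1..s} \<times> {1..fcrs_d n s}) \<union> ({s+1} \<times> {1..fcrs_s0 n s})"

text \<open>X (i,j) is the content of server (i,j); Y r l i j is the message sent by server (i,j)
  (of repair cluster i) to repair server (r,l).\<close>
definition fcrs ::
  "nat \<Rightarrow> nat \<Rightarrow> nat \<Rightarrow> 'f pmf \<Rightarrow> (nat \<times> nat \<Rightarrow> 'f \<Rightarrow> 'a)
     \<Rightarrow> (nat \<Rightarrow> nat \<Rightarrow> nat \<Rightarrow> nat \<Rightarrow> 'f \<Rightarrow> 'b) \<Rightarrow> real \<Rightarrow> real \<Rightarrow> bool" where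
  "fcrs n k s P X Y \<alpha> \<beta> \<longleftrightarrow>
     finite (set_pmf P) \<and>
     (\<forall>v\<in>servers n s. ent P (X v) \<le> \<alpha>) \<and>
     (\<forall>K. K \<subseteq> servers n s \<and> card K = k \<longrightarrow> is_fun_of P id (\<lambda>f. (\<lambda>v\<in>K. X v f))) \<and>
     (\<forall>(r,l)\<in>servers n s. \<forall>i\<in>{1..s}. i \<noteq> r \<longrightarrow>
        (\<forall>j\<in>{1..fcrs_d n s}. is_fun_of P (Y r l i j) (X (i,j)) \<and> ent P (Y r l i j) \<le> \<beta>) \<and>
        is_fun_of P (X (r,l)) (\<lambda>f. (\<lambda>j\<in>{1..fcrs_d n s}. Y r l i j f)))"

definition fcrs_rbt ::
  "nat \<Rightarrow> nat \<Rightarrow> nat \<Rightarrow> 'f pmf \<Rightarrow> (nat \<times> nat \<Rightarrow> 'f \<Rightarrow> 'a)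
     \<Rightarrow> (nat \<Rightarrow> nat \<Rightarrow> nat \<Rightarrow> nat \<Rightarrow> 'f \<Rightarrow> 'b) \<Rightarrow> real \<Rightarrow> real \<Rightarrow> bool" where
  "fcrs_rbt n k s P X Y \<alpha> \<beta> \<longleftrightarrow>
     fcrs n k s P X Y \<alpha> \<beta> \<and>
     (\<forall>(r,l)\<in>servers n s. \<forall>i\<in>{1..s}. i \<noteq> r \<longrightarrow>
        cond_ent P (\<lambda>f. (\<lambda>j\<in>{1..fcrs_d n s}. Y r l i j f)) (X (r,l)) = 0)"

definition cc_m :: "nat \<Rightarrow> nat \<Rightarrow> nat \<Rightarrow> int" where
  "cc_m n k s = Min {int (fcrs_d n s) ^ (s+1) - (\<Prod>i\<in>{1..s+1}. int (fcrs_d n s) - int (ki i)) | ki.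
      ki \<in> {1..s+1} \<rightarrow>\<^sub>E (UNIV :: nat set) \<and> (\<Sum>i\<in>{1..s+1}. ki i) = k \<and> ki (s+1) \<le> fcrs_s0 n s}"

definition gamma_cc :: "nat \<Rightarrow> nat \<Rightarrow> nat \<Rightarrow> real \<Rightarrow> real" where
  "gamma_cc n k s M = M * real (fcrs_d n s) ^ s / real_of_int (cc_m n k s)"

text \<open>Index strings b = b_{s+1} ... b_1 with b_i in [d], as functions on {1..s+1}.\<close>
definition cc_strings :: "nat \<Rightarrow> nat \<Rightarrow> (nat \<Rightarrow> nat) set" where
  "cc_strings n s = {1..s+1} \<rightarrow>\<^sub>E {1..fcrs_d n s}"

text \<open>A (d^{s+1}, m) MDS code (information-theoretic form): enc f b is the symbol C_b
  of the codeword of file f; each symbol has entropy at most M/m and any m symbols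
  determine the file.\<close>
definition is_MDS :: "nat \<Rightarrow> nat \<Rightarrow> nat \<Rightarrow> 'f pmf \<Rightarrow> ('f \<Rightarrow> (nat \<Rightarrow> nat) \<Rightarrow> 'c) \<Rightarrow> bool" where
  "is_MDS n k s P enc \<longleftrightarrow>
     finite (set_pmf P) \<and>
     (\<forall>b\<in>cc_strings n s. ent P (\<lambda>f. enc f b) \<le> ent P id / real_of_int (cc_m n k s)) \<and>
     (\<forall>T. T \<subseteq> cc_strings n s \<and> int (card T) = cc_m n k s \<longrightarrow>
          is_fun_of P id (\<lambda>f. (\<lambda>b\<in>T. enc f b)))"

definition cc_X :: "nat \<Rightarrow> nat \<Rightarrow> ('f \<Rightarrow> (nat \<Rightarrow> nat) \<Rightarrow> 'c)
     \<Rightarrow> nat \<times> nat \<Rightarrow> 'f \<Rightarrow> ((nat \<Rightarrow> nat) \<Rightarrow> 'c)" where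
  "cc_X n s enc v f = (\<lambda>b\<in>{b\<in>cc_strings n s. b (fst v) = snd v}. enc f b)"

definition cc_Y :: "nat \<Rightarrow> nat \<Rightarrow> ('f \<Rightarrow> (nat \<Rightarrow> nat) \<Rightarrow> 'c)
     \<Rightarrow> nat \<Rightarrow> nat \<Rightarrow> nat \<Rightarrow> nat \<Rightarrow> 'f \<Rightarrow> ((nat \<Rightarrow> nat) \<Rightarrow> 'c)" where
  "cc_Y n s enc r l i j f = (\<lambda>b\<in>{b\<in>cc_strings n s. b i = j \<and> b r = l}. enc f b)"

end

theory Submission
  imports Defs "HOL-Computational_Algebra.Polynomial" "HOL-Computational_Algebra.Primes"
begin

lemma pmf_map_fin:
  assumes "finite (set_pmf P)"
  shows "pmf (map_pmf X P) x = (\<Sum>\<omega>\<in>{\<omega>\<in>set_pmf P. X \<omega> = x}. pmf P \<omega>)"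
proof -
  have "pmf (map_pmf X P) x = measure P (X -` {x})" by (simp add: pmf_map)
  also have "\<dots> = measure P (X -` {x} \<inter> set_pmf P)" by (simp add: measure_Int_set_pmf)
  also have "\<dots> = (\<Sum>\<omega>\<in>X -` {x} \<inter> set_pmf P. pmf P \<omega>)"
    using assms by (subst measure_measure_pmf_finite) auto
  also have "X -` {x} \<inter> set_pmf P = {\<omega>\<in>set_pmf P. X \<omega> = x}" by auto
  finally show ?thesis .
qed

lemma sum_map_pmf:
  assumes "finite (set_pmf P)"
  shows "(\<Sum>\<omega>\<in>set_pmf P. pmf P \<omega> * g (X \<omega>)) = (\<Sum>x\<in>set_pmf (map_pmf X P). pmf (map_pmf X P) x * g x)"
proof -
  have "(\<Sum>\<omega>\<in>set_pmf P. pmf P \<omega> * g (X \<omega>)) = (\<Sum>x\<in>X ` set_pmf P. \<Sum>\<omega>\<in>{\<omega>\<in>set_pmf P. X \<omega> = x}. pmf P \<omega> * g (X \<omega>))"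
    using assms by (rule sum.image_gen)
  also have "\<dots> = (\<Sum>x\<in>X ` set_pmf P. pmf (map_pmf X P) x * g x)"
    by (intro sum.cong refl) (simp add: pmf_map_fin[OF assms] sum_distrib_right)
  finally show ?thesis by simp
qed

lemma ent_rep:
  assumes "finite (set_pmf P)"
  shows "ent P X = - (\<Sum>\<omega>\<in>set_pmf P. pmf P \<omega> * log 2 (pmf (map_pmf X P) (X \<omega>)))"
  unfolding ent_def using sum_map_pmf[OF assms, of "\<lambda>x. log 2 (pmf (map_pmf X P) x)" X]
  by (simp add: sum_negf)

lemma ent_nonneg: "finite (set_pmf P) \<Longrightarrow> 0 \<le> ent P X"
  unfolding ent_def
proof (intro sum_nonneg)
  fix x assume "x \<in> set_pmf (map_pmf X P)"
  then have "0 < pmf (map_pmf X P) x" "pmf (map_pmf X P) x \<le> 1" by (auto simp: pmf_positive pmf_le_1)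
  then have "log 2 (pmf (map_pmf X P) x) \<le> 0" by simp
  with \<open>0 < pmf (map_pmf X P) x\<close> show "0 \<le> - (pmf (map_pmf X P) x * log 2 (pmf (map_pmf X P) x))"
    by (simp add: mult_nonneg_nonpos)
qed

lemma pos_map: "\<omega> \<in> set_pmf P \<Longrightarrow> 0 < pmf (map_pmf V P) (V \<omega>)"
  by (simp add: pmf_positive)

lemma ent_submod:
  assumes fin: "finite (set_pmf P)"
  shows "ent P (\<lambda>\<omega>. (X \<omega>, Y \<omega>, Z \<omega>)) + ent P Z \<le> ent P (\<lambda>\<omega>. (X \<omega>, Z \<omega>)) + ent P (\<lambda>\<omega>. (Y \<omega>, Z \<omega>))"
proof -
  define M where "M = restrict_space (measure_pmf P) (set_pmf P)"
  have sp: "space M = set_pmf P" by (simp add: M_def space_restrict_space)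
  have sets: "sets M = Pow (set_pmf P)"
    by (auto simp: M_def sets_restrict_space)
  have meas: "\<And>A. A \<subseteq> set_pmf P \<Longrightarrow> measure M A = measure P A"
    by (simp add: M_def measure_restrict_space)
  interpret information_space M 2
    unfolding M_def by (intro information_space.intro prob_space_restrict_space information_space_axioms.intro)
      (auto simp: measure_pmf.emeasure_eq_1_AE AE_measure_pmf)
  have sf: "simple_function M V" for V :: "_ \<Rightarrow> 'z"
    unfolding simple_function_def sp sets using fin by auto
  have sd: "simple_distributed M V (pmf (map_pmf V P))" for V :: "_ \<Rightarrow> 'z"
  proof (rule simple_distributedI[OF sf])
    fix x assume "x \<in> V ` space M"
    show "pmf (map_pmf V P) x = measure M (V -` {x} \<inter> space M)"
      by (simp add: sp meas pmf_map measure_Int_set_pmf)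
  qed simp
  have "0 \<le> conditional_mutual_information 2 (count_space (X ` space M)) (count_space (Y ` space M)) (count_space (Z ` space M)) X Y Z" by (rule conditional_mutual_information_nonneg[OF sf sf sf])
  also have "conditional_mutual_information 2 (count_space (X ` space M)) (count_space (Y ` space M)) (count_space (Z ` space M)) X Y Z = (\<Sum>(x, y, z)\<in>(\<lambda>x. (X x, Y x, Z x))`space M.
     pmf (map_pmf (\<lambda>\<omega>. (X \<omega>, Y \<omega>, Z \<omega>)) P) (x, y, z) * log 2 (pmf (map_pmf (\<lambda>\<omega>. (X \<omega>, Y \<omega>, Z \<omega>)) P) (x, y, z) /
       (pmf (map_pmf (\<lambda>\<omega>. (X \<omega>, Z \<omega>)) P) (x, z) * (pmf (map_pmf (\<lambda>\<omega>. (Y \<omega>, Z \<omega>)) P) (y,z) / pmf (map_pmf Z P) z))))"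
    by (rule conditional_mutual_information_eq[OF sd sd sd sd])
  also have "(\<lambda>x. (X x, Y x, Z x))`space M = set_pmf (map_pmf (\<lambda>\<omega>. (X \<omega>, Y \<omega>, Z \<omega>)) P)" by (simp add: sp)
  also have "(\<Sum>(x, y, z)\<in>set_pmf (map_pmf (\<lambda>\<omega>. (X \<omega>, Y \<omega>, Z \<omega>)) P).
     pmf (map_pmf (\<lambda>\<omega>. (X \<omega>, Y \<omega>, Z \<omega>)) P) (x, y, z) * log 2 (pmf (map_pmf (\<lambda>\<omega>. (X \<omega>, Y \<omega>, Z \<omega>)) P) (x, y, z) /
       (pmf (map_pmf (\<lambda>\<omega>. (X \<omega>, Z \<omega>)) P) (x, z) * (pmf (map_pmf (\<lambda>\<omega>. (Y \<omega>, Z \<omega>)) P) (y,z) / pmf (map_pmf Z P) z))))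
     = (\<Sum>\<omega>\<in>set_pmf P. pmf P \<omega> * (\<lambda>(x,y,z). log 2 (pmf (map_pmf (\<lambda>\<omega>. (X \<omega>, Y \<omega>, Z \<omega>)) P) (x, y, z) /
       (pmf (map_pmf (\<lambda>\<omega>. (X \<omega>, Z \<omega>)) P) (x, z) * (pmf (map_pmf (\<lambda>\<omega>. (Y \<omega>, Z \<omega>)) P) (y,z) / pmf (map_pmf Z P) z)))) (X \<omega>, Y \<omega>, Z \<omega>))"
    by (subst sum_map_pmf[OF fin]) (simp add: case_prod_beta)
  also have "\<dots> = (\<Sum>\<omega>\<in>set_pmf P. pmf P \<omega> * log 2 (pmf (map_pmf (\<lambda>\<omega>. (X \<omega>, Y \<omega>, Z \<omega>)) P) (X \<omega>, Y \<omega>, Z \<omega>))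
     - pmf P \<omega> * log 2 (pmf (map_pmf (\<lambda>\<omega>. (X \<omega>, Z \<omega>)) P) (X \<omega>, Z \<omega>))
     - pmf P \<omega> * log 2 (pmf (map_pmf (\<lambda>\<omega>. (Y \<omega>, Z \<omega>)) P) (Y \<omega>, Z \<omega>))
     + pmf P \<omega> * log 2 (pmf (map_pmf Z P) (Z \<omega>)))"
  proof (intro sum.cong refl, goal_cases)
    case (1 \<omega>)
    note w = 1
    have p1: "0 < pmf (map_pmf (\<lambda>\<omega>. (X \<omega>, Y \<omega>, Z \<omega>)) P) (X \<omega>, Y \<omega>, Z \<omega>)"
      using pos_map[OF w, of "\<lambda>\<omega>. (X \<omega>, Y \<omega>, Z \<omega>)"] by simp
    have p2: "0 < pmf (map_pmf (\<lambda>\<omega>. (X \<omega>, Z \<omega>)) P) (X \<omega>, Z \<omega>)"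
      using pos_map[OF w, of "\<lambda>\<omega>. (X \<omega>, Z \<omega>)"] by simp
    have p3: "0 < pmf (map_pmf (\<lambda>\<omega>. (Y \<omega>, Z \<omega>)) P) (Y \<omega>, Z \<omega>)"
      using pos_map[OF w, of "\<lambda>\<omega>. (Y \<omega>, Z \<omega>)"] by simp
    have p4: "0 < pmf (map_pmf Z P) (Z \<omega>)" using pos_map[OF w, of Z] by simp
    show ?case using p1 p2 p3 p4
      by (simp add: log_divide log_mult algebra_simps)
  qed
  finally show ?thesis
    using fin by (simp add: ent_rep sum.distrib sum_subtractf)
qed

lemma ent_equiv:
  assumes fin: "finite (set_pmf P)"
    and eq: "\<And>\<omega> \<omega>'. \<omega> \<in> set_pmf P \<Longrightarrow> \<omega>' \<in> set_pmf P \<Longrightarrow> (X \<omega>' = X \<omega>) \<longleftrightarrow> (Z \<omega>' = Z \<omega>)"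
  shows "ent P X = ent P Z"
proof -
  have "pmf (map_pmf X P) (X \<omega>) = pmf (map_pmf Z P) (Z \<omega>)" if "\<omega> \<in> set_pmf P" for \<omega>
    unfolding pmf_map_fin[OF fin] by (intro sum.cong refl) (use eq that in auto)
  then show ?thesis by (simp add: ent_rep[OF fin])
qed

lemma ent_mono_pair:
  assumes fin: "finite (set_pmf P)"
  shows "ent P X \<le> ent P (\<lambda>\<omega>. (X \<omega>, Z \<omega>))"
proof -
  have "pmf P \<omega> * log 2 (pmf (map_pmf (\<lambda>\<omega>. (X \<omega>, Z \<omega>)) P) (X \<omega>, Z \<omega>)) \<le> pmf P \<omega> * log 2 (pmf (map_pmf X P) (X \<omega>))"
    if w: "\<omega> \<in> set_pmf P" for \<omega>
  proof -
    have p: "0 < pmf (map_pmf (\<lambda>\<omega>. (X \<omega>, Z \<omega>)) P) (X \<omega>, Z \<omega>)"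
      using pos_map[OF w, of "\<lambda>\<omega>. (X \<omega>, Z \<omega>)"] by simp
    have "pmf (map_pmf (\<lambda>\<omega>. (X \<omega>, Z \<omega>)) P) (X \<omega>, Z \<omega>) \<le> pmf (map_pmf X P) (X \<omega>)"
      unfolding pmf_map_fin[OF fin] by (rule sum_mono2) (use fin in auto)
    with p have "log 2 (pmf (map_pmf (\<lambda>\<omega>. (X \<omega>, Z \<omega>)) P) (X \<omega>, Z \<omega>)) \<le> log 2 (pmf (map_pmf X P) (X \<omega>))"
      by simp
    then show ?thesis by (intro mult_left_mono) auto
  qed
  then show ?thesis unfolding ent_rep[OF fin] by (simp add: sum_mono)
qed

lemma ent_fun_le:
  assumes fin: "finite (set_pmf P)" and f: "is_fun_of P X Z"
  shows "ent P X \<le> ent P Z"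
proof -
  obtain g where g: "\<And>\<omega>. \<omega> \<in> set_pmf P \<Longrightarrow> X \<omega> = g (Z \<omega>)" using f unfolding is_fun_of_def by blast
  have "ent P X \<le> ent P (\<lambda>\<omega>. (X \<omega>, Z \<omega>))" by (rule ent_mono_pair[OF fin])
  also have "\<dots> = ent P Z" by (rule ent_equiv[OF fin]) (auto simp: g)
  finally show ?thesis .
qed

lemma ent_fun_pair:
  assumes fin: "finite (set_pmf P)" and f: "is_fun_of P X Z"
  shows "ent P (\<lambda>\<omega>. (Z \<omega>, X \<omega>)) = ent P Z"
proof -
  obtain g where g: "\<And>\<omega>. \<omega> \<in> set_pmf P \<Longrightarrow> X \<omega> = g (Z \<omega>)" using f unfolding is_fun_of_def by blast
  show ?thesis by (rule ent_equiv[OF fin]) (auto simp: g)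
qed

lemma ent_const: "ent P (\<lambda>\<omega>. c) = 0"
  by (simp add: ent_def map_pmf_const)

definition hs :: "'f pmf \<Rightarrow> ('i \<Rightarrow> 'f \<Rightarrow> 'v) \<Rightarrow> 'i set \<Rightarrow> real" where
  "hs P V A = ent P (\<lambda>\<omega>. restrict (\<lambda>i. V i \<omega>) A)"

lemma restrict_eq_iff: "restrict f A = restrict g A \<longleftrightarrow> (\<forall>i\<in>A. f i = g i)"
  by (auto simp: restrict_def fun_eq_iff)

lemma hs_nonneg: "finite (set_pmf P) \<Longrightarrow> 0 \<le> hs P V A"
  unfolding hs_def by (rule ent_nonneg)

lemma hs_empty: "finite (set_pmf P) \<Longrightarrow> hs P V {} = 0"
  unfolding hs_def by (simp add: restrict_def ent_const)

lemma hs_submod: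
  assumes fin: "finite (set_pmf P)"
  shows "hs P V (A \<union> B) + hs P V (A \<inter> B) \<le> hs P V A + hs P V B"
proof -
  let ?r = "\<lambda>C \<omega>. restrict (\<lambda>i. V i \<omega>) C"
  have "ent P (\<lambda>\<omega>. (?r (A - B) \<omega>, ?r (B - A) \<omega>, ?r (A \<inter> B) \<omega>)) + ent P (?r (A \<inter> B))
     \<le> ent P (\<lambda>\<omega>. (?r (A - B) \<omega>, ?r (A \<inter> B) \<omega>)) + ent P (\<lambda>\<omega>. (?r (B - A) \<omega>, ?r (A \<inter> B) \<omega>))"
    by (rule ent_submod[OF fin])
  moreover have "ent P (\<lambda>\<omega>. (?r (A - B) \<omega>, ?r (B - A) \<omega>, ?r (A \<inter> B) \<omega>)) = hs P V (A \<union> B)"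
    unfolding hs_def by (rule ent_equiv[OF fin]) (auto simp: restrict_eq_iff)
  moreover have "ent P (\<lambda>\<omega>. (?r (A - B) \<omega>, ?r (A \<inter> B) \<omega>)) = hs P V A"
    unfolding hs_def by (rule ent_equiv[OF fin]) (auto simp: restrict_eq_iff)
  moreover have "ent P (\<lambda>\<omega>. (?r (B - A) \<omega>, ?r (A \<inter> B) \<omega>)) = hs P V B"
    unfolding hs_def by (rule ent_equiv[OF fin]) (auto simp: restrict_eq_iff)
  ultimately show ?thesis unfolding hs_def by simp
qed

lemma hs_mono:
  assumes fin: "finite (set_pmf P)" and "A \<subseteq> B"
  shows "hs P V A \<le> hs P V B"
proof -
  have "ent P (\<lambda>\<omega>. restrict (\<lambda>i. V i \<omega>) A) \<le> ent P (\<lambda>\<omega>. restrict (\<lambda>i. V i \<omega>) B)"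
    by (rule ent_fun_le[OF fin]) (use assms(2) in \<open>auto simp: is_fun_of_def intro!: exI[of _ "\<lambda>F. restrict F A"] simp: restrict_def fun_eq_iff\<close>)
  then show ?thesis by (simp add: hs_def)
qed

lemma hs_single: "finite (set_pmf P) \<Longrightarrow> hs P V {i} = ent P (V i)"
  unfolding hs_def by (rule ent_equiv) (auto simp: restrict_eq_iff)

definition win :: "nat \<Rightarrow> nat \<Rightarrow> nat \<Rightarrow> nat set" where
  "win d x t = (\<lambda>a. (x + a) mod d) ` {0..<t}"

lemma win_0[simp]: "win d x 0 = {}" by (simp add: win_def)

lemma win_Suc: "win d x (Suc u) = win d x u \<union> {(x + u) mod d}"
  by (auto simp: win_def less_Suc_eq)

lemma win_sub: "0 < d \<Longrightarrow> win d x t \<subseteq> {0..<d}"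
  by (auto simp: win_def)

lemma win_inj: "inj_on (\<lambda>a::nat. (x + a) mod (d::nat)) {0..<d}"
proof (rule inj_onI)
  fix a b assume a: "a \<in> {0..<d}" and b: "b \<in> {0..<d}" and e: "(x + a) mod d = (x + b) mod d"
  have *: "a = b" if ab: "a \<le> b" and bd: "b < d" and e: "(x + a) mod d = (x + b) mod d" for a b :: nat
  proof -
    have "(x + b) mod d = (x + a) mod d \<longleftrightarrow> d dvd (x + b) - (x + a)"
      by (rule mod_eq_dvd_iff_nat) (use ab in simp)
    with e have "d dvd (x + b) - (x + a)" by simp
    then have "d dvd b - a" by simp
    moreover have "b - a < d" using bd by simp
    ultimately have "b - a = 0" using nat_dvd_not_less by blast
    then show ?thesis using ab by simp
  qed
  show "a = b"
  proof (cases "a \<le> b")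
    case True then show ?thesis using *[of a b] a b e by simp
  next
    case False then show ?thesis using *[of b a] a b e by simp
  qed
qed

lemma card_win: "t \<le> d \<Longrightarrow> card (win d x t) = t"
  unfolding win_def
  by (subst card_image) (auto intro: inj_on_subset[OF win_inj])

lemma win_full: "0 < d \<Longrightarrow> win d x d = {0..<d}"
  by (rule card_subset_eq) (auto simp: card_win win_sub)

lemma shift_bij: "0 < (d::nat) \<Longrightarrow> bij_betw (\<lambda>x. (x + 1) mod d) {..<d} {..<d}"
proof -
  assume d: "0 < d"
  have e: "(\<lambda>x. (x + 1) mod d) = (\<lambda>a. (1 + a) mod d)" by (simp add: add.commute)
  have inj: "inj_on (\<lambda>x. (x + 1) mod d) {..<d}"
    using win_inj[of 1 d] unfolding e by (simp add: atLeast0LessThan)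
  have "(\<lambda>x. (x + 1) mod d) ` {..<d} = {..<d}"
    by (rule card_subset_eq) (use d inj in \<open>auto simp: card_image\<close>)
  with inj show ?thesis by (simp add: bij_betw_def)
qed

lemma sum_shift: "0 < (d::nat) \<Longrightarrow> (\<Sum>x<d. f ((x + 1) mod d)) = (\<Sum>x<d. (f x :: real))"
  using sum.reindex_bij_betw[OF shift_bij, of d f] by simp

lemma noninc_le: "(\<And>u. Suc u < d \<Longrightarrow> (a (Suc u) :: real) \<le> a u) \<Longrightarrow> u \<le> v \<Longrightarrow> v < d \<Longrightarrow> a v \<le> a u"
proof (induction v)
  case 0 then show ?case by simp
next
  case (Suc v)
  show ?case
  proof (cases "u = Suc v")
    case True then show ?thesis by simp
  next
    case False
    then have "a v \<le> a u" using Suc by simp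
    moreover have "a (Suc v) \<le> a v" using Suc by simp
    ultimately show ?thesis by simp
  qed
qed

lemma avg_noninc:
  assumes mono: "\<And>u. Suc u < d \<Longrightarrow> (a (Suc u) :: real) \<le> a u" and t: "t \<le> d"
  shows "real t * (\<Sum>u<d. a u) \<le> real d * (\<Sum>u<t. a u)"
proof (cases t)
  case 0 then show ?thesis by simp
next
  case (Suc t')
  have le1: "real t * a t' \<le> (\<Sum>u<t. a u)"
  proof -
    have "(\<Sum>u<t. a t') \<le> (\<Sum>u<t. a u)"
      by (intro sum_mono noninc_le[where d=d and a=a, OF mono]) (use Suc t in auto)
    then show ?thesis by simp
  qed
  have le2: "(\<Sum>u\<in>{t..<d}. a u) \<le> real (d - t) * a t'"
  proof -
    have "(\<Sum>u\<in>{t..<d}. a u) \<le> (\<Sum>u\<in>{t..<d}. a t')"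
      by (intro sum_mono noninc_le[where d=d and a=a, OF mono]) (use Suc t in auto)
    then show ?thesis by simp
  qed
  have split: "(\<Sum>u<d. a u) = (\<Sum>u<t. a u) + (\<Sum>u\<in>{t..<d}. a u)"
    using t by (metis atLeast0LessThan sum.atLeastLessThan_concat zero_le)
  have "real t * (\<Sum>u\<in>{t..<d}. a u) \<le> real t * (real (d - t) * a t')"
    using le2 by (intro mult_left_mono) auto
  also have "\<dots> = real (d - t) * (real t * a t')" by simp
  also have "\<dots> \<le> real (d - t) * (\<Sum>u<t. a u)"
    using le1 by (intro mult_left_mono) auto
  finally have "real t * (\<Sum>u\<in>{t..<d}. a u) \<le> real (d - t) * (\<Sum>u<t. a u)" .
  then show ?thesis using t by (simp add: split algebra_simps of_nat_diff)
qed

locale polym =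
  fixes h :: "'i set \<Rightarrow> real"
  assumes submod: "h (A \<union> B) + h (A \<inter> B) \<le> h A + h B"
    and mono: "A \<subseteq> B \<Longrightarrow> h A \<le> h B"
    and empty: "h {} = 0"
begin

lemma nonneg: "0 \<le> h A"
  using mono[of "{}" A] empty by simp

lemma dimret:
  assumes "B \<subseteq> A"
  shows "h (A \<union> E) - h A \<le> h (B \<union> E) - h B"
proof -
  have "h (A \<union> (B \<union> E)) + h (A \<inter> (B \<union> E)) \<le> h A + h (B \<union> E)" by (rule submod)
  moreover have "A \<union> (B \<union> E) = A \<union> E" using assms by auto
  moreover have "h B \<le> h (A \<inter> (B \<union> E))" by (rule mono) (use assms in auto)
  ultimately show ?thesis by simp
qed

lemma dep_prop:
  assumes "h (A \<union> B) = h A"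
  shows "h (Z \<union> A \<union> B) = h (Z \<union> A)"
proof -
  have "h ((Z \<union> A) \<union> B) - h (Z \<union> A) \<le> h (A \<union> B) - h A" by (rule dimret) auto
  moreover have "h (Z \<union> A) \<le> h ((Z \<union> A) \<union> B)" by (rule mono) auto
  ultimately show ?thesis using assms by (simp add: Un_assoc)
qed

lemma chain:
  assumes "finite C" and "B \<subseteq> A"
  shows "h (A \<union> C) - h A \<le> (\<Sum>c\<in>C. h (B \<union> {c}) - h B)"
  using assms(1)
proof (induction C)
  case empty then show ?case by simp
next
  case (insert c C)
  have "h ((A \<union> C) \<union> {c}) - h (A \<union> C) \<le> h (B \<union> {c}) - h B"
    by (rule dimret) (use assms(2) in auto)
  moreover have "A \<union> insert c C = (A \<union> C) \<union> {c}" by auto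
  ultimately show ?case using insert by simp
qed

lemma subadd:
  assumes "finite C"
  shows "h C \<le> (\<Sum>c\<in>C. h {c})"
  using chain[OF assms, of "{}" "{}"] by (simp add: empty)

lemma han_cyc:
  assumes d: "0 < d" and t: "t \<le> d"
  shows "real t * (h (Z \<union> y ` {0..<d}) - h Z) \<le> (\<Sum>x<d. h (Z \<union> y ` win d x t) - h Z)"
proof -
  define G where "G x u = h (Z \<union> y ` win d x u)" for x u
  define a where "a u = (\<Sum>x<d. G x (Suc u) - G x u)" for u
  have tele: "(\<Sum>u<t. a u) = (\<Sum>x<d. G x t - h Z)" for t
  proof (induction t)
    case 0 then show ?case by (simp add: G_def)
  next
    case (Suc t) then show ?case by (simp add: a_def sum.distrib[symmetric] algebra_simps sum_subtractf)
  qed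
  have dec: "a (Suc u) \<le> a u" if "Suc u < d" for u
  proof -
    have "G x (Suc (Suc u)) - G x (Suc u) \<le> G ((x + 1) mod d) (Suc u) - G ((x + 1) mod d) u" for x
    proof -
      have sub: "win d ((x + 1) mod d) u \<subseteq> win d x (Suc u)"
        by (auto simp: win_def mod_add_left_eq intro!: image_eqI[where x="Suc _"])
      have e: "(Suc x mod d + u) mod d = Suc (x + u) mod d" by (metis add_Suc mod_add_left_eq)
      have "h ((Z \<union> y ` win d x (Suc u)) \<union> {y ((x + Suc u) mod d)}) - h (Z \<union> y ` win d x (Suc u))
         \<le> h ((Z \<union> y ` win d ((x + 1) mod d) u) \<union> {y ((x + Suc u) mod d)}) - h (Z \<union> y ` win d ((x + 1) mod d) u)"
        by (rule dimret) (use sub in auto)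
      then show ?thesis by (simp add: G_def win_Suc e image_Un Un_assoc insert_commute)
    qed
    then have "a (Suc u) \<le> (\<Sum>x<d. G ((x + 1) mod d) (Suc u) - G ((x + 1) mod d) u)"
      unfolding a_def by (intro sum_mono)
    also have "\<dots> = a u" unfolding a_def by (rule sum_shift[OF d])
    finally show ?thesis .
  qed
  have "real t * (\<Sum>u<d. a u) \<le> real d * (\<Sum>u<t. a u)" by (rule avg_noninc[where a=a, OF dec t]) auto
  moreover have "(\<Sum>u<d. a u) = real d * (h (Z \<union> y ` {0..<d}) - h Z)"
  proof -
    have "(\<Sum>u<d. a u) = (\<Sum>x<d. G x d - h Z)" by (rule tele)
    also have "\<dots> = (\<Sum>x<d. h (Z \<union> y ` {0..<d}) - h Z)" by (simp add: G_def win_full[OF d])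
    finally show ?thesis by simp
  qed
  ultimately have "real t * (real d * (h (Z \<union> y ` {0..<d}) - h Z)) \<le> real d * (\<Sum>x<d. h (Z \<union> y ` win d x t) - h Z)"
    by (simp only: tele G_def)
  then have "real d * (real t * (h (Z \<union> y ` {0..<d}) - h Z)) \<le> real d * (\<Sum>x<d. h (Z \<union> y ` win d x t) - h Z)"
    by (simp only: mult.left_commute)
  then show ?thesis using d by simp
qed

end

lemma polym_hs: "finite (set_pmf P) \<Longrightarrow> polym (hs P V)"
  by unfold_locales (auto intro: hs_submod hs_mono hs_empty)

lemma sum_PiE_insert:
  assumes "a \<notin> A" "finite A" "finite (B a)"
  shows "(\<Sum>\<sigma>\<in>PiE (insert a A) B. f \<sigma>) = (\<Sum>\<sigma>\<in>PiE A B. \<Sum>x\<in>B a. (f (\<sigma>(a := x)) :: real))"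
proof -
  have "(\<Sum>\<sigma>\<in>PiE (insert a A) B. f \<sigma>) = (\<Sum>p\<in>B a \<times> PiE A B. f ((\<lambda>(y, g). g(a := y)) p))"
    unfolding PiE_insert_eq by (rule sum.reindex[OF inj_combinator[OF assms(1)], unfolded comp_def])
  also have "\<dots> = (\<Sum>x\<in>B a. \<Sum>\<sigma>\<in>PiE A B. f (\<sigma>(a := x)))"
    by (simp add: sum.cartesian_product split_def)
  also have "\<dots> = (\<Sum>\<sigma>\<in>PiE A B. \<Sum>x\<in>B a. f (\<sigma>(a := x)))" by (rule sum.swap)
  finally show ?thesis .
qed

lemma shift_bij_gen: "0 < (d::nat) \<Longrightarrow> bij_betw (\<lambda>x. (x + a) mod d) {..<d} {..<d}"
proof -
  assume d: "0 < d"
  have e: "(\<lambda>x. (x + a) mod d) = (\<lambda>x. (a + x) mod d)" by (simp add: add.commute)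
  have inj: "inj_on (\<lambda>x. (x + a) mod d) {..<d}"
    using win_inj[of a d] unfolding e by (simp add: atLeast0LessThan)
  have "(\<lambda>x. (x + a) mod d) ` {..<d} = {..<d}"
    by (rule card_subset_eq) (use d inj in \<open>auto simp: card_image\<close>)
  with inj show ?thesis by (simp add: bij_betw_def)
qed

lemma sum_win:
  assumes d: "0 < d" and t: "t \<le> d"
  shows "(\<Sum>x<d. \<Sum>w\<in>win d x t. G w) = real t * (\<Sum>w<d. (G w :: real))"
proof -
  have "(\<Sum>w\<in>win d x t. G w) = (\<Sum>a\<in>{0..<t}. G ((x + a) mod d))" for x
  proof -
    have "inj_on (\<lambda>a. (x + a) mod d) {0..<t}" by (rule inj_on_subset[OF win_inj]) (use t in auto)
    then show ?thesis unfolding win_def by (simp add: sum.reindex)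
  qed
  then have "(\<Sum>x<d. \<Sum>w\<in>win d x t. G w) = (\<Sum>x<d. \<Sum>a\<in>{0..<t}. G ((x + a) mod d))" by simp
  also have "\<dots> = (\<Sum>a\<in>{0..<t}. \<Sum>x<d. G ((x + a) mod d))" by (rule sum.swap)
  also have "\<dots> = (\<Sum>a\<in>{0..<t}. \<Sum>w<d. G w)"
    by (simp add: sum.reindex_bij_betw[OF shift_bij_gen[OF d]])
  finally show ?thesis by simp
qed

context polym begin

lemma absorb:
  assumes "finite W" and dep: "\<And>w. w \<in> W \<Longrightarrow> h ({a w} \<union> {b w}) = h {a w}" and sub: "a ` W \<subseteq> A"
  shows "h (A \<union> b ` W) = h A"
  using assms(1) dep sub
proof (induction W)
  case empty then show ?case by simp
next
  case (insert w W)
  have "h ((A \<union> b ` W) \<union> {a w} \<union> {b w}) = h ((A \<union> b ` W) \<union> {a w})"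
    by (rule dep_prop) (use insert in auto)
  moreover have "(A \<union> b ` W) \<union> {a w} = A \<union> b ` W" using insert by auto
  moreover have "A \<union> b ` insert w W = (A \<union> b ` W) \<union> {a w} \<union> {b w}" using insert by auto
  ultimately show ?case using insert by simp
qed

lemma cyc_cond:
  assumes d: "0 < d" and t: "t \<le> d"
    and det1: "h ({xv} \<union> y ` {0..<d}) = h (y ` {0..<d})"
    and det2: "h ({xv} \<union> y ` {0..<d}) = h {xv}"
    and det3: "\<And>w. w < d \<Longrightarrow> h ({xs w} \<union> {y w}) = h {xs w}"
  shows "(\<Sum>x<d. h (Z \<union> xs ` win d x t \<union> {xv}) - h (Z \<union> xs ` win d x t)) \<le> real (d - t) * (h (Z \<union> {xv}) - h Z)"
proof -
  let ?Y = "y ` {0..<d}"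
  have full: "h (Z' \<union> {xv}) = h (Z' \<union> ?Y)" if "B \<subseteq> ?Y" and "Z' = Z \<union> B" for Z' B
  proof -
    have "h (Z' \<union> {xv} \<union> ?Y) = h (Z' \<union> {xv})" by (rule dep_prop) (use det2 in \<open>simp add: Un_commute\<close>)
    moreover have "h (Z' \<union> ?Y \<union> {xv}) = h (Z' \<union> ?Y)" by (rule dep_prop) (use det1 in \<open>simp add: Un_commute\<close>)
    moreover have "Z' \<union> {xv} \<union> ?Y = Z' \<union> ?Y \<union> {xv}" by auto
    ultimately show ?thesis by simp
  qed
  have step: "h (Z \<union> xs ` win d x t \<union> {xv}) - h (Z \<union> xs ` win d x t) \<le> h (Z \<union> ?Y) - h (Z \<union> y ` win d x t)" for x
  proof -
    let ?A = "Z \<union> xs ` win d x t"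
    have fw: "finite (win d x t)" by (simp add: win_def)
    have ws: "win d x t \<subseteq> {0..<d}" by (rule win_sub[OF d])
    have a1: "h (?A \<union> y ` win d x t) = h ?A"
      by (rule absorb[OF fw, where a=xs and b=y]) (use det3 ws in auto)
    have a2: "h ((?A \<union> {xv}) \<union> y ` win d x t) = h (?A \<union> {xv})"
      by (rule absorb[OF fw, where a=xs and b=y]) (use det3 ws in auto)
    have "h ((?A \<union> y ` win d x t) \<union> {xv}) - h (?A \<union> y ` win d x t) \<le> h ((Z \<union> y ` win d x t) \<union> {xv}) - h (Z \<union> y ` win d x t)"
      by (rule dimret) auto
    moreover have "(?A \<union> y ` win d x t) \<union> {xv} = (?A \<union> {xv}) \<union> y ` win d x t" by auto
    moreover have "h ((Z \<union> y ` win d x t) \<union> {xv}) = h ((Z \<union> y ` win d x t) \<union> ?Y)"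
      by (rule full[of "y ` win d x t"]) (use ws in auto)
    moreover have "(Z \<union> y ` win d x t) \<union> ?Y = Z \<union> ?Y" using ws by auto
    ultimately show ?thesis using a1 a2 by simp
  qed
  have "(\<Sum>x<d. h (Z \<union> xs ` win d x t \<union> {xv}) - h (Z \<union> xs ` win d x t)) \<le> (\<Sum>x<d. h (Z \<union> ?Y) - h (Z \<union> y ` win d x t))"
    by (rule sum_mono) (rule step)
  also have "\<dots> = real d * (h (Z \<union> ?Y) - h Z) - (\<Sum>x<d. h (Z \<union> y ` win d x t) - h Z)"
    by (simp add: sum_subtractf algebra_simps)
  also have "\<dots> \<le> real d * (h (Z \<union> ?Y) - h Z) - real t * (h (Z \<union> ?Y) - h Z)"
    using han_cyc[OF d t, of Z y] by simp
  also have "\<dots> = real (d - t) * (h (Z \<union> {xv}) - h Z)"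
    using full[of "{}" Z] t by (simp add: of_nat_diff algebra_simps)
  finally show ?thesis .
qed

end

locale lbs = polym h for h :: "'i set \<Rightarrow> real" +
  fixes xs :: "nat \<Rightarrow> nat \<Rightarrow> 'i" and ys :: "nat \<Rightarrow> nat \<Rightarrow> nat \<Rightarrow> nat \<Rightarrow> 'i"
    and d s :: nat and \<beta> :: real and srv :: "(nat \<times> nat) set"
  assumes d: "0 < d" and s2: "2 \<le> s"
  and det1: "\<And>r l i. (r,l) \<in> srv \<Longrightarrow> i \<in> {1..s} \<Longrightarrow> i \<noteq> r \<Longrightarrow>
      h ({xs r l} \<union> ys r l i ` {1..d}) = h (ys r l i ` {1..d})"
  and det2: "\<And>r l i. (r,l) \<in> srv \<Longrightarrow> i \<in> {1..s} \<Longrightarrow> i \<noteq> r \<Longrightarrow>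
      h ({xs r l} \<union> ys r l i ` {1..d}) = h {xs r l}"
  and det3: "\<And>r l i j. (r,l) \<in> srv \<Longrightarrow> i \<in> {1..s} \<Longrightarrow> i \<noteq> r \<Longrightarrow> j \<in> {1..d} \<Longrightarrow>
      h ({xs i j} \<union> {ys r l i j}) = h {xs i j}"
  and bnd: "\<And>r l i j. (r,l) \<in> srv \<Longrightarrow> i \<in> {1..s} \<Longrightarrow> i \<noteq> r \<Longrightarrow> j \<in> {1..d} \<Longrightarrow>
      h {ys r l i j} \<le> \<beta>"
begin

definition Kc :: "(nat \<Rightarrow> nat) \<Rightarrow> nat \<Rightarrow> (nat \<Rightarrow> nat) \<Rightarrow> 'i set" where
  "Kc t q \<sigma> = (\<Union>i\<in>{1..q}. (\<lambda>w. xs i (w + 1)) ` win d (\<sigma> i) (t i))"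

lemma img_shift: "(\<lambda>w. f (w + 1)) ` {0..<d} = f ` {1..d}"
proof -
  have "{1..d} = Suc ` {0..<d}" using image_Suc_atLeastLessThan[of 0 d] by auto
  then have "f ` {1..d} = f ` (Suc ` {0..<d})" by simp
  also have "\<dots> = (\<lambda>w. f (w + 1)) ` {0..<d}" by (simp only: image_image Suc_eq_plus1)
  finally show ?thesis by simp
qed

lemma hsingle:
  assumes rl: "(r,l) \<in> srv"
  shows "h {xs r l} \<le> real d * \<beta>"
proof -
  define i where "i = (if r = 1 then 2 else (1::nat))"
  have i: "i \<in> {1..s}" "i \<noteq> r" using s2 by (auto simp: i_def)
  have "h {xs r l} \<le> h ({xs r l} \<union> ys r l i ` {1..d})" by (rule mono) auto
  also have "\<dots> = h (ys r l i ` {1..d})" by (rule det1[OF rl i])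
  also have "\<dots> \<le> (\<Sum>c\<in>ys r l i ` {1..d}. h {c})" by (rule subadd) simp
  also have "\<dots> \<le> (\<Sum>j\<in>{1..d}. h {ys r l i j})"
    using sum_image_le[of "{1..d}" "\<lambda>c. h {c}" "ys r l i"] nonneg by (simp add: comp_def)
  also have "\<dots> \<le> (\<Sum>j\<in>{1..d}. \<beta>)" by (intro sum_mono bnd[OF rl i]) auto
  finally show ?thesis by simp
qed

lemma Kc_upd: "j \<notin> {1..q} \<Longrightarrow> Kc t q (\<sigma>(j := x)) = Kc t q \<sigma>"
  unfolding Kc_def by (intro SUP_cong refl) auto

lemma Kc_Suc: "Kc t (Suc q) \<sigma> = Kc t q \<sigma> \<union> (\<lambda>w. xs (Suc q) (w + 1)) ` win d (\<sigma> (Suc q)) (t (Suc q))"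
  unfolding Kc_def by (simp add: atLeastAtMostSuc_conv Un_commute)

lemma L3:
  assumes rl: "(r,l) \<in> srv" and q: "q < r" "q \<le> s" and t: "\<And>i. t i \<le> d"
  shows "(\<Sum>\<sigma>\<in>PiE {1..q} (\<lambda>_. {..<d}). h (Kc t q \<sigma> \<union> {xs r l}) - h (Kc t q \<sigma>))
     \<le> (\<Prod>i\<in>{1..q}. real (d - t i)) * h {xs r l}"
  using q
proof (induction q)
  case 0 then show ?case by (simp add: Kc_def empty)
next
  case (Suc q)
  let ?i = "Suc q"
  have i: "?i \<in> {1..s}" "?i \<noteq> r" using Suc.prems by auto
  have ins: "{1..Suc q} = insert ?i {1..q}" by auto
  have "(\<Sum>\<sigma>\<in>PiE {1..Suc q} (\<lambda>_. {..<d}). h (Kc t (Suc q) \<sigma> \<union> {xs r l}) - h (Kc t (Suc q) \<sigma>))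
     = (\<Sum>\<sigma>\<in>PiE {1..q} (\<lambda>_. {..<d}). \<Sum>x<d.
          h (Kc t q \<sigma> \<union> (\<lambda>w. xs ?i (w + 1)) ` win d x (t ?i) \<union> {xs r l}) - h (Kc t q \<sigma> \<union> (\<lambda>w. xs ?i (w + 1)) ` win d x (t ?i)))"
    unfolding ins by (subst sum_PiE_insert) (auto simp: Kc_Suc Kc_upd)
  also have "\<dots> \<le> (\<Sum>\<sigma>\<in>PiE {1..q} (\<lambda>_. {..<d}). real (d - t ?i) * (h (Kc t q \<sigma> \<union> {xs r l}) - h (Kc t q \<sigma>)))"
  proof (intro sum_mono)
    fix \<sigma>
    show "(\<Sum>x<d. h (Kc t q \<sigma> \<union> (\<lambda>w. xs ?i (w + 1)) ` win d x (t ?i) \<union> {xs r l}) - h (Kc t q \<sigma> \<union> (\<lambda>w. xs ?i (w + 1)) ` win d x (t ?i)))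
      \<le> real (d - t ?i) * (h (Kc t q \<sigma> \<union> {xs r l}) - h (Kc t q \<sigma>))"
    proof (rule cyc_cond[OF d t])
      show "h ({xs r l} \<union> (\<lambda>w. ys r l ?i (w + 1)) ` {0..<d}) = h ((\<lambda>w. ys r l ?i (w + 1)) ` {0..<d})"
        unfolding img_shift[of "ys r l ?i"] by (rule det1[OF rl i])
      show "h ({xs r l} \<union> (\<lambda>w. ys r l ?i (w + 1)) ` {0..<d}) = h {xs r l}"
        unfolding img_shift[of "ys r l ?i"] by (rule det2[OF rl i])
      show "h ({xs ?i (w + 1)} \<union> {ys r l ?i (w + 1)}) = h {xs ?i (w + 1)}" if "w < d" for w
        by (rule det3[OF rl i]) (use that in auto)
    qed
  qed
  also have "\<dots> = real (d - t ?i) * (\<Sum>\<sigma>\<in>PiE {1..q} (\<lambda>_. {..<d}). h (Kc t q \<sigma> \<union> {xs r l}) - h (Kc t q \<sigma>))"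
    by (simp add: sum_distrib_left)
  also have "\<dots> \<le> real (d - t ?i) * ((\<Prod>i\<in>{1..q}. real (d - t i)) * h {xs r l})"
    using Suc by (intro mult_left_mono) auto
  also have "\<dots> = (\<Prod>i\<in>{1..Suc q}. real (d - t i)) * h {xs r l}"
    unfolding ins by simp
  finally show ?case .
qed

end

context lbs begin
lemma add_chain:
  assumes "finite C"
  shows "h (A \<union> f ` C) \<le> h A + (\<Sum>c\<in>C. h (A \<union> {f c}) - h A)"
proof -
  have "h (A \<union> f ` C) - h A \<le> (\<Sum>c\<in>f ` C. h (A \<union> {c}) - h A)"
    by (rule chain) (use assms in auto)
  also have "\<dots> \<le> (\<Sum>c\<in>C. h (A \<union> {f c}) - h A)"
  proof -
    have nn: "0 \<le> h (A \<union> {f c}) - h A" for c using mono[of A "A \<union> {f c}"] by auto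
    show ?thesis using sum_image_le[OF assms, of "\<lambda>c. h (A \<union> {c}) - h A" f] nn by (simp add: comp_def)
  qed
  finally show ?thesis by simp
qed

end

context lbs begin
lemma Phi:
  assumes q: "q \<le> s" and t: "\<And>i. t i \<le> d" and srv: "\<And>i j. i \<in> {1..s} \<Longrightarrow> j \<in> {1..d} \<Longrightarrow> (i,j) \<in> srv"
  shows "(\<Sum>\<sigma>\<in>PiE {1..q} (\<lambda>_. {..<d}). h (Kc t q \<sigma>))
     \<le> \<beta> * real d ^ 2 * (real d ^ q - (\<Prod>i\<in>{1..q}. real (d - t i)))"
  using q
proof (induction q)
  case 0 then show ?case by (simp add: Kc_def empty)
next
  case (Suc q)
  let ?i = "Suc q"
  let ?P = "\<Prod>i\<in>{1..q}. real (d - t i)"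
  have ins: "{1..Suc q} = insert ?i {1..q}" by auto
  define G where "G \<sigma> w = h (Kc t q \<sigma> \<union> {xs ?i (w + 1)}) - h (Kc t q \<sigma>)" for \<sigma> w
  have "(\<Sum>\<sigma>\<in>PiE {1..Suc q} (\<lambda>_. {..<d}). h (Kc t (Suc q) \<sigma>))
     = (\<Sum>\<sigma>\<in>PiE {1..q} (\<lambda>_. {..<d}). \<Sum>x<d. h (Kc t q \<sigma> \<union> (\<lambda>w. xs ?i (w + 1)) ` win d x (t ?i)))"
    unfolding ins by (subst sum_PiE_insert) (auto simp: Kc_Suc Kc_upd)
  also have "\<dots> \<le> (\<Sum>\<sigma>\<in>PiE {1..q} (\<lambda>_. {..<d}). \<Sum>x<d. h (Kc t q \<sigma>) + (\<Sum>w\<in>win d x (t ?i). G \<sigma> w))"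
    unfolding G_def by (intro sum_mono add_chain) (simp add: win_def)
  also have "\<dots> = real d * (\<Sum>\<sigma>\<in>PiE {1..q} (\<lambda>_. {..<d}). h (Kc t q \<sigma>))
      + real (t ?i) * (\<Sum>w<d. \<Sum>\<sigma>\<in>PiE {1..q} (\<lambda>_. {..<d}). G \<sigma> w)"
  proof -
    have "(\<Sum>\<sigma>\<in>PiE {1..q} (\<lambda>_. {..<d}). \<Sum>x<d. h (Kc t q \<sigma>) + (\<Sum>w\<in>win d x (t ?i). G \<sigma> w))
      = (\<Sum>\<sigma>\<in>PiE {1..q} (\<lambda>_. {..<d}). real d * h (Kc t q \<sigma>) + real (t ?i) * (\<Sum>w<d. G \<sigma> w))"
      by (simp add: sum.distrib sum_win[OF d t])
    also have "\<dots> = real d * (\<Sum>\<sigma>\<in>PiE {1..q} (\<lambda>_. {..<d}). h (Kc t q \<sigma>))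
      + real (t ?i) * (\<Sum>\<sigma>\<in>PiE {1..q} (\<lambda>_. {..<d}). \<Sum>w<d. G \<sigma> w)"
      by (simp add: sum.distrib sum_distrib_left)
    also have "(\<Sum>\<sigma>\<in>PiE {1..q} (\<lambda>_. {..<d}). \<Sum>w<d. G \<sigma> w) = (\<Sum>w<d. \<Sum>\<sigma>\<in>PiE {1..q} (\<lambda>_. {..<d}). G \<sigma> w)"
      by (rule sum.swap)
    finally show ?thesis .
  qed
  also have "\<dots> \<le> real d * (\<beta> * real d ^ 2 * (real d ^ q - ?P)) + real (t ?i) * (\<Sum>w<d. ?P * (real d * \<beta>))"
  proof (intro add_mono mult_left_mono sum_mono)
    show "(\<Sum>\<sigma>\<in>PiE {1..q} (\<lambda>_. {..<d}). h (Kc t q \<sigma>)) \<le> \<beta> * real d ^ 2 * (real d ^ q - ?P)"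
      using Suc by simp
    fix w assume w: "w \<in> {..<d}"
    have rl: "(?i, w + 1) \<in> srv" by (rule srv) (use Suc.prems w in auto)
    have "(\<Sum>\<sigma>\<in>PiE {1..q} (\<lambda>_. {..<d}). G \<sigma> w) \<le> ?P * h {xs ?i (w + 1)}"
      unfolding G_def by (rule L3[OF rl _ _ t]) (use Suc.prems in auto)
    also have "\<dots> \<le> ?P * (real d * \<beta>)"
      by (intro mult_left_mono hsingle[OF rl]) (auto intro: prod_nonneg)
    finally show "(\<Sum>\<sigma>\<in>PiE {1..q} (\<lambda>_. {..<d}). G \<sigma> w) \<le> ?P * (real d * \<beta>)" .
  qed auto
  also have "\<dots> = \<beta> * real d ^ 2 * (real d ^ Suc q - (\<Prod>i\<in>{1..Suc q}. real (d - t i)))"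
    unfolding ins using t[of ?i] by (simp add: of_nat_diff power2_eq_square algebra_simps)
  finally show ?case .
qed

end

context lbs begin
lemma final:
  assumes t: "\<And>i. t i \<le> d" and srv: "\<And>i j. i \<in> {1..s} \<Longrightarrow> j \<in> {1..d} \<Longrightarrow> (i,j) \<in> srv"
    and srv2: "\<And>l. l \<in> {1..t (Suc s)} \<Longrightarrow> (Suc s, l) \<in> srv"
  shows "(\<Sum>\<sigma>\<in>PiE {1..s} (\<lambda>_. {..<d}). h (Kc t s \<sigma> \<union> xs (Suc s) ` {1..t (Suc s)}))
     \<le> real d * \<beta> * (real d ^ Suc s - (\<Prod>i\<in>{1..Suc s}. real (d - t i)))"
proof -
  let ?P = "\<Prod>i\<in>{1..s}. real (d - t i)"
  define G where "G \<sigma> l = h (Kc t s \<sigma> \<union> {xs (Suc s) l}) - h (Kc t s \<sigma>)" for \<sigma> l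
  have "(\<Sum>\<sigma>\<in>PiE {1..s} (\<lambda>_. {..<d}). h (Kc t s \<sigma> \<union> xs (Suc s) ` {1..t (Suc s)}))
    \<le> (\<Sum>\<sigma>\<in>PiE {1..s} (\<lambda>_. {..<d}). h (Kc t s \<sigma>) + (\<Sum>l\<in>{1..t (Suc s)}. G \<sigma> l))"
    unfolding G_def by (intro sum_mono add_chain) simp
  also have "\<dots> = (\<Sum>\<sigma>\<in>PiE {1..s} (\<lambda>_. {..<d}). h (Kc t s \<sigma>)) + (\<Sum>l\<in>{1..t (Suc s)}. \<Sum>\<sigma>\<in>PiE {1..s} (\<lambda>_. {..<d}). G \<sigma> l)"
    by (simp add: sum.distrib) (rule sum.swap)
  also have "\<dots> \<le> \<beta> * real d ^ 2 * (real d ^ s - ?P) + (\<Sum>l\<in>{1..t (Suc s)}. ?P * (real d * \<beta>))"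
  proof (intro add_mono sum_mono)
    show "(\<Sum>\<sigma>\<in>PiE {1..s} (\<lambda>_. {..<d}). h (Kc t s \<sigma>)) \<le> \<beta> * real d ^ 2 * (real d ^ s - ?P)"
      by (rule Phi[OF _ t srv]) auto
    fix l assume l: "l \<in> {1..t (Suc s)}"
    have rl: "(Suc s, l) \<in> srv" by (rule srv2[OF l])
    have "(\<Sum>\<sigma>\<in>PiE {1..s} (\<lambda>_. {..<d}). G \<sigma> l) \<le> ?P * h {xs (Suc s) l}"
      unfolding G_def by (rule L3[OF rl _ _ t]) auto
    also have "\<dots> \<le> ?P * (real d * \<beta>)"
      by (intro mult_left_mono hsingle[OF rl]) (auto intro: prod_nonneg)
    finally show "(\<Sum>\<sigma>\<in>PiE {1..s} (\<lambda>_. {..<d}). G \<sigma> l) \<le> ?P * (real d * \<beta>)" .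
  qed
  also have "\<dots> = real d * \<beta> * (real d ^ Suc s - (\<Prod>i\<in>{1..Suc s}. real (d - t i)))"
  proof -
    have ins: "{1..Suc s} = insert (Suc s) {1..s}" by auto
    show ?thesis unfolding ins using t[of "Suc s"] by (simp add: of_nat_diff power2_eq_square algebra_simps)
  qed
  finally show ?thesis .
qed

end

definition ccS :: "nat \<Rightarrow> nat \<Rightarrow> nat \<Rightarrow> int set" where
  "ccS n k s = {int (fcrs_d n s) ^ (s+1) - (\<Prod>i\<in>{1..s+1}. int (fcrs_d n s) - int (ki i)) | ki.
      ki \<in> {1..s+1} \<rightarrow>\<^sub>E (UNIV :: nat set) \<and> (\<Sum>i\<in>{1..s+1}. ki i) = k \<and> ki (s+1) \<le> fcrs_s0 n s}"

lemma cc_m_Min: "cc_m n k s = Min (ccS n k s)"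
  by (simp add: cc_m_def ccS_def)

lemma k_le_d:
  assumes "0 < k" "s \<le> n div k" "0 < s"
  shows "k \<le> fcrs_d n s"
proof -
  have "s * k \<le> n div k * k" using assms by simp
  also have "\<dots> \<le> n" by simp
  finally have "k * s \<le> n" by (simp add: mult.commute)
  then show ?thesis unfolding fcrs_d_def using assms(3) by (simp add: less_eq_div_iff_mult_less_eq)
qed

lemma ki_le: "(\<Sum>i\<in>{1..(s::nat)+1}. ki i) = (k::nat) \<Longrightarrow> i \<in> {1..s+1} \<Longrightarrow> ki i \<le> k"
  using member_le_sum[of i "{1..s+1}" ki] by auto

lemma ccS_finite: "finite (ccS n k s)"
proof -
  have "ccS n k s \<subseteq> (\<lambda>ki. int (fcrs_d n s) ^ (s+1) - (\<Prod>i\<in>{1..s+1}. int (fcrs_d n s) - int (ki i))) ` ({1..s+1} \<rightarrow>\<^sub>E {0..k})"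
  proof
    fix x assume "x \<in> ccS n k s"
    then obtain ki where ki: "ki \<in> {1..s+1} \<rightarrow>\<^sub>E (UNIV :: nat set)" "(\<Sum>i\<in>{1..s+1}. ki i) = k"
      "x = int (fcrs_d n s) ^ (s+1) - (\<Prod>i\<in>{1..s+1}. int (fcrs_d n s) - int (ki i))"
      unfolding ccS_def by blast
    have "ki \<in> {1..s+1} \<rightarrow>\<^sub>E {0..k}" using ki(1) ki_le[OF ki(2)] by (simp add: PiE_iff)
    then show "x \<in> (\<lambda>ki. int (fcrs_d n s) ^ (s+1) - (\<Prod>i\<in>{1..s+1}. int (fcrs_d n s) - int (ki i))) ` ({1..s+1} \<rightarrow>\<^sub>E {0..k})"
      using ki(3) by blast
  qed
  moreover have "finite ({1..s+1} \<rightarrow>\<^sub>E {0..k})" by (rule finite_PiE) auto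
  ultimately show ?thesis by (meson finite_imageI finite_subset)
qed

lemma ccS_ne: "0 < s \<Longrightarrow> ccS n k s \<noteq> {}"
proof -
  define ki where "ki = (\<lambda>i\<in>{1..s+1}. if i = 1 then k else (0::nat))"
  have "(\<Sum>i\<in>{1..s+1}. ki i) = k"
    by (simp add: ki_def sum.If_cases)
  moreover assume "0 < s"
  then have "ki (s+1) \<le> fcrs_s0 n s" by (simp add: ki_def)
  moreover have "ki \<in> {1..s+1} \<rightarrow>\<^sub>E (UNIV :: nat set)" by (simp add: ki_def)
  ultimately show ?thesis unfolding ccS_def by blast
qed

lemma cc_m_obtain:
  assumes "0 < s"
  obtains ki where "ki \<in> {1..s+1} \<rightarrow>\<^sub>E (UNIV :: nat set)" "(\<Sum>i\<in>{1..s+1}. ki i) = k" "ki (s+1) \<le> fcrs_s0 n s"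
    "cc_m n k s = int (fcrs_d n s) ^ (s+1) - (\<Prod>i\<in>{1..s+1}. int (fcrs_d n s) - int (ki i))"
proof -
  have "cc_m n k s \<in> ccS n k s" unfolding cc_m_Min by (rule Min_in[OF ccS_finite ccS_ne[OF assms]])
  then show ?thesis using that unfolding ccS_def by blast
qed

lemma cc_m_le:
  assumes "ki \<in> {1..s+1} \<rightarrow>\<^sub>E (UNIV :: nat set)" "(\<Sum>i\<in>{1..s+1}. ki i) = k" "ki (s+1) \<le> fcrs_s0 n s"
  shows "cc_m n k s \<le> int (fcrs_d n s) ^ (s+1) - (\<Prod>i\<in>{1..s+1}. int (fcrs_d n s) - int (ki i))"
  unfolding cc_m_Min by (rule Min_le[OF ccS_finite]) (use assms in \<open>auto simp: ccS_def\<close>)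

lemma prod_lt:
  fixes d s :: nat
  assumes k: "(\<Sum>i\<in>{1..s+1}. ki i) = k" "0 < k" "k \<le> d"
  shows "(\<Prod>i\<in>{1..s+1}. int d - int (ki i)) < int d ^ (s+1)"
proof -
  have "\<exists>i0\<in>{1..s+1}. 0 < ki i0"
  proof (rule ccontr)
    assume "\<not> ?thesis"
    then have "\<forall>i\<in>{1..s+1}. ki i = 0" by simp
    then have "(\<Sum>i\<in>{1..s+1}. ki i) = 0" by simp
    with k show False by simp
  qed
  then obtain i0 where i0: "i0 \<in> {1..s+1}" "0 < ki i0" by blast
  have le: "ki i \<le> d" if "i \<in> {1..s+1}" for i using ki_le[OF k(1) that] k by simp
  have "(\<Prod>i\<in>{1..s+1}. int d - int (ki i)) = (int d - int (ki i0)) * (\<Prod>i\<in>{1..s+1} - {i0}. int d - int (ki i))"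
    by (rule prod.remove) (use i0 in auto)
  also have "\<dots> \<le> (int d - 1) * int d ^ s"
  proof (rule mult_mono)
    show "int d - int (ki i0) \<le> int d - 1" using i0 by simp
    show "(\<Prod>i\<in>{1..s+1} - {i0}. int d - int (ki i)) \<le> int d ^ s"
      by (rule prod_le_power) (use le i0 k in auto)
    show "0 \<le> int d - 1" using k by simp
    show "0 \<le> (\<Prod>i\<in>{1..s+1} - {i0}. int d - int (ki i))"
      by (rule prod_nonneg) (use le in auto)
  qed
  also have "\<dots> < int d ^ (s+1)" using k by (simp add: algebra_simps)
  finally show ?thesis .
qed

lemma cc_m_pos:
  assumes "0 < k" "s \<le> n div k" "0 < s"
  shows "0 < cc_m n k s"
proof -
  obtain ki where ki: "ki \<in> {1..s+1} \<rightarrow>\<^sub>E (UNIV :: nat set)" "(\<Sum>i\<in>{1..s+1}. ki i) = k" "ki (s+1) \<le> fcrs_s0 n s"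
    "cc_m n k s = int (fcrs_d n s) ^ (s+1) - (\<Prod>i\<in>{1..s+1}. int (fcrs_d n s) - int (ki i))"
    by (rule cc_m_obtain[OF assms(3)])
  show ?thesis using prod_lt[OF ki(2) assms(1) k_le_d[OF assms]] ki(4) by simp
qed

lemma cc_m_le_N:
  assumes "0 < k" "s \<le> n div k" "0 < s"
  shows "cc_m n k s \<le> int (fcrs_d n s) ^ (s+1)"
proof -
  obtain ki where ki: "ki \<in> {1..s+1} \<rightarrow>\<^sub>E (UNIV :: nat set)" "(\<Sum>i\<in>{1..s+1}. ki i) = k" "ki (s+1) \<le> fcrs_s0 n s"
    "cc_m n k s = int (fcrs_d n s) ^ (s+1) - (\<Prod>i\<in>{1..s+1}. int (fcrs_d n s) - int (ki i))"
    by (rule cc_m_obtain[OF assms(3)])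
  have "0 \<le> (\<Prod>i\<in>{1..s+1}. int (fcrs_d n s) - int (ki i))"
    by (rule prod_nonneg) (use ki_le[OF ki(2)] k_le_d[OF assms] in fastforce)
  then show ?thesis using ki(4) by simp
qed

lemma hs_fun:
  assumes fin: "finite (set_pmf P)"
    and f: "is_fun_of P (\<lambda>\<omega>. restrict (\<lambda>i. V i \<omega>) A) (\<lambda>\<omega>. restrict (\<lambda>i. V i \<omega>) B)"
  shows "hs P V (A \<union> B) = hs P V B"
proof (rule antisym)
  obtain g where g: "\<And>\<omega>. \<omega> \<in> set_pmf P \<Longrightarrow> restrict (\<lambda>i. V i \<omega>) A = g (restrict (\<lambda>i. V i \<omega>) B)"
    using f unfolding is_fun_of_def by blast
  have "is_fun_of P (\<lambda>\<omega>. restrict (\<lambda>i. V i \<omega>) (A \<union> B)) (\<lambda>\<omega>. restrict (\<lambda>i. V i \<omega>) B)"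
    unfolding is_fun_of_def
  proof (intro exI[of _ "\<lambda>F. (\<lambda>i\<in>A \<union> B. if i \<in> B then F i else g F i)"] ballI)
    fix \<omega> assume w: "\<omega> \<in> set_pmf P"
    show "restrict (\<lambda>i. V i \<omega>) (A \<union> B) = (\<lambda>i\<in>A \<union> B. if i \<in> B then restrict (\<lambda>i. V i \<omega>) B i else g (restrict (\<lambda>i. V i \<omega>) B) i)"
      using g[OF w, symmetric] by (auto simp: fun_eq_iff restrict_def)
  qed
  then show "hs P V (A \<union> B) \<le> hs P V B" unfolding hs_def by (rule ent_fun_le[OF fin])
  show "hs P V B \<le> hs P V (A \<union> B)" by (rule hs_mono[OF fin]) auto
qed

lemma ent_inj:
  assumes fin: "finite (set_pmf P)" and "inj f"
  shows "ent P (\<lambda>\<omega>. f (X \<omega>)) = ent P X"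
  by (rule ent_equiv[OF fin]) (use assms(2) in \<open>auto simp: inj_eq\<close>)

definition VV :: "(nat \<times> nat \<Rightarrow> 'f \<Rightarrow> 'a) \<Rightarrow> (nat \<Rightarrow> nat \<Rightarrow> nat \<Rightarrow> nat \<Rightarrow> 'f \<Rightarrow> 'b)
    \<Rightarrow> (nat \<times> nat) + (nat \<times> nat \<times> nat \<times> nat) \<Rightarrow> 'f \<Rightarrow> 'a + 'b" where
  "VV X Y idx \<omega> = (case idx of Inl v \<Rightarrow> Inl (X v \<omega>) | Inr (r, l, i, j) \<Rightarrow> Inr (Y r l i j \<omega>))"

lemma VV_simps[simp]: "VV X Y (Inl v) \<omega> = Inl (X v \<omega>)" "VV X Y (Inr (r, l, i, j)) \<omega> = Inr (Y r l i j \<omega>)"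
  by (simp_all add: VV_def)

lemma hs_Inl_single: "finite (set_pmf P) \<Longrightarrow> hs P (VV X Y) {Inl v} = ent P (X v)"
proof -
  assume fin: "finite (set_pmf P)"
  have "VV X Y (Inl v) = (\<lambda>\<omega>. Inl (X v \<omega>))" by (simp add: fun_eq_iff)
  then show ?thesis by (simp add: hs_single[OF fin] ent_inj[OF fin])
qed

lemma hs_Inr_single: "finite (set_pmf P) \<Longrightarrow> hs P (VV X Y) {Inr (r, l, i, j)} = ent P (Y r l i j)"
proof -
  assume fin: "finite (set_pmf P)"
  have "VV X Y (Inr (r, l, i, j)) = (\<lambda>\<omega>. Inr (Y r l i j \<omega>))" by (simp add: fun_eq_iff)
  then show ?thesis by (simp add: hs_single[OF fin] ent_inj[OF fin])
qed

lemma hs_Inl_set: "finite (set_pmf P) \<Longrightarrow> hs P (VV X Y) (Inl ` K) = ent P (\<lambda>\<omega>. \<lambda>v\<in>K. X v \<omega>)"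
  unfolding hs_def by (rule ent_equiv) (auto simp: restrict_eq_iff)

lemma fcrs_lbs:
  fixes P :: "'f pmf" and X :: "nat \<times> nat \<Rightarrow> 'f \<Rightarrow> 'a" and Y :: "nat \<Rightarrow> nat \<Rightarrow> nat \<Rightarrow> nat \<Rightarrow> 'f \<Rightarrow> 'b"
  assumes F: "fcrs_rbt n k s P X Y \<alpha> \<beta>" and s2: "2 \<le> s" and d: "0 < fcrs_d n s"
  shows "lbs (hs P (VV X Y)) (\<lambda>i j. Inl (i, j)) (\<lambda>r l i j. Inr (r, l, i, j)) (fcrs_d n s) s \<beta> (servers n s)"
proof -
  let ?d = "fcrs_d n s"
  have fin: "finite (set_pmf P)" using F by (simp add: fcrs_rbt_def fcrs_def)
  note F' = F[unfolded fcrs_rbt_def fcrs_def]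
  interpret polym "hs P (VV X Y)" by (rule polym_hs[OF fin])
  show ?thesis
  proof (unfold_locales)
    show "0 < ?d" by (rule d)
    show "2 \<le> s" by (rule s2)
  next
    fix r l i assume rl: "(r, l) \<in> servers n s" and i: "i \<in> {1..s}" "i \<noteq> r"
    let ?Y = "(\<lambda>j. Inr (r, l, i, j)) ` {1..?d} :: ((nat \<times> nat) + (nat \<times> nat \<times> nat \<times> nat)) set"
    have fY: "is_fun_of P (X (r, l)) (\<lambda>\<omega>. \<lambda>j\<in>{1..?d}. Y r l i j \<omega>)"
      using F' rl i by auto
    then obtain g where g: "\<And>\<omega>. \<omega> \<in> set_pmf P \<Longrightarrow> X (r, l) \<omega> = g (\<lambda>j\<in>{1..?d}. Y r l i j \<omega>)"
      unfolding is_fun_of_def by blast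
    show "hs P (VV X Y) ({Inl (r, l)} \<union> ?Y) = hs P (VV X Y) ?Y"
    proof (rule hs_fun[OF fin])
      show "is_fun_of P (\<lambda>\<omega>. restrict (\<lambda>idx. VV X Y idx \<omega>) {Inl (r, l)}) (\<lambda>\<omega>. restrict (\<lambda>idx. VV X Y idx \<omega>) ?Y)"
        unfolding is_fun_of_def
      proof (intro exI[of _ "\<lambda>F. (\<lambda>idx\<in>{Inl (r, l)}. Inl (g (\<lambda>j\<in>{1..?d}. projr (F (Inr (r, l, i, j))))))"] ballI)
        fix \<omega> assume w: "\<omega> \<in> set_pmf P"
        have eq: "(\<lambda>j\<in>{1..?d}. projr (restrict (\<lambda>idx. VV X Y idx \<omega>) ?Y (Inr (r, l, i, j)))) = (\<lambda>j\<in>{1..?d}. Y r l i j \<omega>)"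
          by (auto simp: fun_eq_iff)
        then show "restrict (\<lambda>idx. VV X Y idx \<omega>) {Inl (r, l)} =
          (\<lambda>idx\<in>{Inl (r, l)}. Inl (g (\<lambda>j\<in>{1..?d}. projr (restrict (\<lambda>idx. VV X Y idx \<omega>) ?Y (Inr (r, l, i, j))))))"
          by (subst eq) (auto simp: fun_eq_iff g[OF w])
      qed
    qed
    have ce: "cond_ent P (\<lambda>\<omega>. \<lambda>j\<in>{1..?d}. Y r l i j \<omega>) (X (r, l)) = 0"
      using F' rl i by auto
    have "hs P (VV X Y) ({Inl (r, l)} \<union> ?Y) = ent P (\<lambda>\<omega>. (X (r, l) \<omega>, \<lambda>j\<in>{1..?d}. Y r l i j \<omega>))"
      unfolding hs_def by (rule ent_equiv[OF fin]) (auto simp: restrict_eq_iff)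
    also have "\<dots> = ent P (X (r, l))" using ce by (simp add: cond_ent_def)
    also have "\<dots> = hs P (VV X Y) {Inl (r, l)}" by (simp add: hs_Inl_single[OF fin])
    finally show "hs P (VV X Y) ({Inl (r, l)} \<union> ?Y) = hs P (VV X Y) {Inl (r, l)}" .
  next
    fix r l i j assume rl: "(r, l) \<in> servers n s" and i: "i \<in> {1..s}" "i \<noteq> r" and j: "j \<in> {1..?d}"
    have fY: "is_fun_of P (Y r l i j) (X (i, j))" using F' rl i j by auto
    then obtain g where g: "\<And>\<omega>. \<omega> \<in> set_pmf P \<Longrightarrow> Y r l i j \<omega> = g (X (i, j) \<omega>)"
      unfolding is_fun_of_def by blast
    have "hs P (VV X Y) ({Inr (r, l, i, j)} \<union> {Inl (i, j)}) = hs P (VV X Y) {Inl (i, j)}"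
    proof (rule hs_fun[OF fin])
      show "is_fun_of P (\<lambda>\<omega>. restrict (\<lambda>idx. VV X Y idx \<omega>) {Inr (r, l, i, j)}) (\<lambda>\<omega>. restrict (\<lambda>idx. VV X Y idx \<omega>) {Inl (i, j)})"
        unfolding is_fun_of_def
        by (intro exI[of _ "\<lambda>F. (\<lambda>idx\<in>{Inr (r, l, i, j)}. Inr (g (projl (F (Inl (i, j))))))"] ballI)
          (auto simp: fun_eq_iff g)
    qed
    then show "hs P (VV X Y) ({Inl (i, j)} \<union> {Inr (r, l, i, j)}) = hs P (VV X Y) {Inl (i, j)}"
      by (simp add: Un_commute)
    have "ent P (Y r l i j) \<le> \<beta>" using F' rl i j by auto
    then show "hs P (VV X Y) {Inr (r, l, i, j)} \<le> \<beta>" by (simp add: hs_Inr_single[OF fin])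
  qed
qed

definition Kset :: "nat \<Rightarrow> nat \<Rightarrow> (nat \<Rightarrow> nat) \<Rightarrow> (nat \<Rightarrow> nat) \<Rightarrow> (nat \<times> nat) set" where
  "Kset d s t \<sigma> = (\<Union>i\<in>{1..s}. (\<lambda>w. (i, w + 1)) ` win d (\<sigma> i) (t i)) \<union> (\<lambda>l. (s + 1, l)) ` {1..t (s + 1)}"

lemma card_Kset:
  assumes t: "\<And>i. t i \<le> d"
  shows "card (Kset d s t \<sigma>) = (\<Sum>i\<in>{1..s+1}. t i)"
proof -
  have c1: "card ((\<lambda>w. (i, w + 1)) ` win d (\<sigma> i) (t i)) = t i" for i
    by (subst card_image) (auto simp: inj_on_def card_win[OF t])
  have "card (\<Union>i\<in>{1..s}. (\<lambda>w. (i, w + 1)) ` win d (\<sigma> i) (t i)) = (\<Sum>i\<in>{1..s}. card ((\<lambda>w. (i, w + 1)) ` win d (\<sigma> i) (t i)))"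
    by (rule card_UN_disjoint) (auto simp: win_def)
  also have "\<dots> = (\<Sum>i\<in>{1..s}. t i)" by (rule sum.cong[OF refl]) (rule c1)
  finally have u: "card (\<Union>i\<in>{1..s}. (\<lambda>w. (i, w + 1)) ` win d (\<sigma> i) (t i)) = (\<Sum>i\<in>{1..s}. t i)" .
  have c2: "card ((\<lambda>l. (s + 1, l)) ` {1..t (s + 1)}) = t (s + 1)"
    by (subst card_image) (auto simp: inj_on_def)
  have "card (Kset d s t \<sigma>) = card (\<Union>i\<in>{1..s}. (\<lambda>w. (i, w + 1)) ` win d (\<sigma> i) (t i)) + card ((\<lambda>l. (s + 1, l)) ` {1..t (s + 1)})"
    unfolding Kset_def by (rule card_Un_disjoint) (auto simp: win_def)
  also have "\<dots> = (\<Sum>i\<in>{1..s+1}. t i)" unfolding u c2 by simp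
  finally show ?thesis .
qed

lemma Kset_sub:
  assumes t: "t (s + 1) \<le> fcrs_s0 n s" and d: "0 < fcrs_d n s"
  shows "Kset (fcrs_d n s) s t \<sigma> \<subseteq> servers n s"
proof -
  have "win (fcrs_d n s) (\<sigma> i) (t i) \<subseteq> {0..<fcrs_d n s}" for i by (rule win_sub[OF d])
  then show ?thesis using t unfolding Kset_def servers_def by fastforce
qed

lemma part1:
  fixes P :: "'f pmf" and X :: "nat \<times> nat \<Rightarrow> 'f \<Rightarrow> 'a" and Y :: "nat \<Rightarrow> nat \<Rightarrow> nat \<Rightarrow> nat \<Rightarrow> 'f \<Rightarrow> 'b"
  assumes k0: "0 < k" and s2: "2 \<le> s" and sk: "s \<le> n div k"
    and F: "fcrs_rbt n k s P X Y \<alpha> \<beta>"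
  shows "real (fcrs_d n s) * \<beta> \<ge> gamma_cc n k s (ent P id)"
proof -
  define d where "d = fcrs_d n s"
  have s0: "0 < s" using s2 by simp
  have kd: "k \<le> d" unfolding d_def by (rule k_le_d[OF k0 sk s0])
  have d0: "0 < d" using kd k0 by simp
  have fin: "finite (set_pmf P)" using F by (simp add: fcrs_rbt_def fcrs_def)
  note F' = F[unfolded fcrs_rbt_def fcrs_def]
  obtain ki where ki: "ki \<in> {1..s+1} \<rightarrow>\<^sub>E (UNIV :: nat set)" "(\<Sum>i\<in>{1..s+1}. ki i) = k" "ki (s+1) \<le> fcrs_s0 n s"
    "cc_m n k s = int d ^ (s+1) - (\<Prod>i\<in>{1..s+1}. int d - int (ki i))"
    unfolding d_def by (rule cc_m_obtain[OF s0])
  define t where "t i = (if i \<in> {1..s+1} then ki i else 0)" for i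
  have t: "t i \<le> d" for i using ki_le[OF ki(2), of i] kd by (auto simp: t_def)
  have tsum: "(\<Sum>i\<in>{1..s+1}. t i) = k" using ki(2) by (simp add: t_def)
  have ts: "t (s + 1) \<le> fcrs_s0 n s" using ki(3) by (simp add: t_def)
  interpret L: lbs "hs P (VV X Y)" "\<lambda>i j. Inl (i, j)" "\<lambda>r l i j. Inr (r, l, i, j)" d s \<beta> "servers n s"
    unfolding d_def by (rule fcrs_lbs[OF F s2]) (use d0 d_def in simp)
  let ?S = "PiE {1..s} (\<lambda>_. {..<d})"
  have img: "Inl ` Kset d s t \<sigma> = L.Kc t s \<sigma> \<union> (\<lambda>l. Inl (Suc s, l)) ` {1..t (Suc s)}" for \<sigma>
    unfolding Kset_def L.Kc_def by (auto simp: image_Un image_UN image_image)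
  have M_le: "ent P id \<le> hs P (VV X Y) (Inl ` Kset d s t \<sigma>)" for \<sigma>
  proof -
    have sub: "Kset d s t \<sigma> \<subseteq> servers n s" unfolding d_def by (rule Kset_sub[where t=t, OF ts d0[unfolded d_def]])
    have card: "card (Kset d s t \<sigma>) = k" using card_Kset[OF t] tsum by simp
    have "is_fun_of P id (\<lambda>f. \<lambda>v\<in>Kset d s t \<sigma>. X v f)" using F' sub card by blast
    then have "ent P id \<le> ent P (\<lambda>f. \<lambda>v\<in>Kset d s t \<sigma>. X v f)" by (rule ent_fun_le[OF fin])
    then show ?thesis by (simp add: hs_Inl_set[OF fin])
  qed
  have "real d ^ s * ent P id = (\<Sum>\<sigma>\<in>?S. ent P id)"
    by (simp add: card_PiE)
  also have "\<dots> \<le> (\<Sum>\<sigma>\<in>?S. hs P (VV X Y) (L.Kc t s \<sigma> \<union> (\<lambda>l. Inl (Suc s, l)) ` {1..t (Suc s)}))"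
    by (intro sum_mono) (use M_le img in simp)
  also have "\<dots> \<le> real d * \<beta> * (real d ^ Suc s - (\<Prod>i\<in>{1..Suc s}. real (d - t i)))"
  proof (rule L.final[OF t])
    show "(i, j) \<in> servers n s" if "i \<in> {1..s}" "j \<in> {1..d}" for i j
      using that by (simp add: servers_def d_def)
    show "(Suc s, l) \<in> servers n s" if "l \<in> {1..t (Suc s)}" for l
      using that ts by (simp add: servers_def)
  qed
  also have "(\<Prod>i\<in>{1..Suc s}. real (d - t i)) = real_of_int (\<Prod>i\<in>{1..s+1}. int d - int (ki i))"
  proof -
    have "(\<Prod>i\<in>{1..Suc s}. real (d - t i)) = (\<Prod>i\<in>{1..s+1}. real_of_int (int d - int (ki i)))"
    proof (rule prod.cong)
      fix i assume i: "i \<in> {1..s+1}"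
      then have "t i = ki i" by (simp add: t_def)
      with t[of i] show "real (d - t i) = real_of_int (int d - int (ki i))" by (simp add: of_nat_diff)
    qed simp
    then show ?thesis by (simp add: of_int_prod)
  qed
  also have "real d ^ Suc s - real_of_int (\<Prod>i\<in>{1..s+1}. int d - int (ki i)) = real_of_int (cc_m n k s)"
    by (simp add: ki(4))
  finally have main: "real d ^ s * ent P id \<le> real d * \<beta> * real_of_int (cc_m n k s)" .
  have m0: "0 < real_of_int (cc_m n k s)" using cc_m_pos[OF k0 sk s0] by simp
  have "gamma_cc n k s (ent P id) = ent P id * real d ^ s / real_of_int (cc_m n k s)"
    by (simp add: gamma_cc_def d_def)
  also have "\<dots> \<le> real d * \<beta>"
    using main m0 by (simp add: pos_divide_le_eq mult.commute)
  finally show ?thesis by (simp add: d_def)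
qed

lemma card_fix:
  assumes fI: "finite I" and J: "J \<subseteq> I" and c: "\<And>i. i \<in> J \<Longrightarrow> c i \<in> D" and fD: "finite D"
  shows "card {b \<in> PiE I (\<lambda>_. D). \<forall>i\<in>J. b i = c i} = card D ^ (card I - card J)"
proof -
  have "{b \<in> PiE I (\<lambda>_. D). \<forall>i\<in>J. b i = c i} = PiE I (\<lambda>i. if i \<in> J then {c i} else D)"
    using J c by (auto simp: PiE_iff extensional_def split: if_splits)
  then have "card {b \<in> PiE I (\<lambda>_. D). \<forall>i\<in>J. b i = c i} = (\<Prod>i\<in>I. card (if i \<in> J then {c i} else D))"
    using fI by (simp add: card_PiE)
  also have "\<dots> = (\<Prod>i\<in>I. if i \<in> J then 1 else card D)" by (intro prod.cong) auto
  also have "\<dots> = card D ^ card (I - J)"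
    using fI by (simp add: prod.If_cases Diff_eq)
  also have "card (I - J) = card I - card J" using J fI by (simp add: card_Diff_subset finite_subset)
  finally show ?thesis .
qed

lemma ent_restrict_le:
  assumes fin: "finite (set_pmf P)" and fA: "finite A" and b: "\<And>b. b \<in> A \<Longrightarrow> ent P (\<lambda>\<omega>. enc \<omega> b) \<le> c"
  shows "ent P (\<lambda>\<omega>. \<lambda>b\<in>A. enc \<omega> b) \<le> real (card A) * c"
proof -
  interpret polym "hs P (\<lambda>b \<omega>. enc \<omega> b)" by (rule polym_hs[OF fin])
  have "ent P (\<lambda>\<omega>. \<lambda>b\<in>A. enc \<omega> b) = hs P (\<lambda>b \<omega>. enc \<omega> b) A" by (simp add: hs_def)
  also have "\<dots> \<le> (\<Sum>b\<in>A. hs P (\<lambda>b \<omega>. enc \<omega> b) {b})" by (rule subadd[OF fA])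
  also have "\<dots> = (\<Sum>b\<in>A. ent P (\<lambda>\<omega>. enc \<omega> b))" by (simp add: hs_single[OF fin])
  also have "\<dots> \<le> (\<Sum>b\<in>A. c)" by (intro sum_mono b)
  finally show ?thesis by simp
qed

lemma is_fun_of_trans: "is_fun_of P X Y \<Longrightarrow> is_fun_of P Y Z \<Longrightarrow> is_fun_of P X Z"
  unfolding is_fun_of_def by (metis comp_apply)

lemma card_str1:
  assumes "i \<in> {1..s+1}" "j \<in> {1..fcrs_d n s}"
  shows "card {b \<in> cc_strings n s. b i = j} = fcrs_d n s ^ s"
proof -
  have "card {b \<in> PiE {1..s+1} (\<lambda>_. {1..fcrs_d n s}). \<forall>i'\<in>{i}. b i' = (\<lambda>_. j) i'} = card {1..fcrs_d n s} ^ (card {1..s+1} - card {i})"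
    by (rule card_fix) (use assms in auto)
  then show ?thesis by (simp add: cc_strings_def)
qed

lemma card_str2:
  assumes "i \<in> {1..s+1}" "r \<in> {1..s+1}" "i \<noteq> r" "j \<in> {1..fcrs_d n s}" "l \<in> {1..fcrs_d n s}"
  shows "card {b \<in> cc_strings n s. b i = j \<and> b r = l} = fcrs_d n s ^ (s - 1)"
proof -
  have "card {b \<in> PiE {1..s+1} (\<lambda>_. {1..fcrs_d n s}). \<forall>i'\<in>{i, r}. b i' = (\<lambda>x. if x = i then j else l) i'}
      = card {1..fcrs_d n s} ^ (card {1..s+1} - card {i, r})"
    by (rule card_fix) (use assms in auto)
  moreover have "{b \<in> PiE {1..s+1} (\<lambda>_. {1..fcrs_d n s}). \<forall>i'\<in>{i, r}. b i' = (\<lambda>x. if x = i then j else l) i'}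
      = {b \<in> cc_strings n s. b i = j \<and> b r = l}"
    using assms(3) by (auto simp: cc_strings_def)
  ultimately show ?thesis using assms(3) by simp
qed

lemma fin_str: "finite (cc_strings n s)"
  unfolding cc_strings_def by (rule finite_PiE) auto

lemma cover:
  fixes P :: "'g pmf" and enc :: "'g \<Rightarrow> (nat \<Rightarrow> nat) \<Rightarrow> 'c"
  assumes k0: "0 < k" and s2: "2 \<le> s" and sk: "s \<le> n div k" and s0d: "fcrs_s0 n s < fcrs_d n s"
    and K: "K \<subseteq> servers n s" "card K = k" and MDS: "is_MDS n k s P enc"
  shows "is_fun_of P id (\<lambda>f. \<lambda>v\<in>K. cc_X n s enc v f)"
proof -
  define d where "d = fcrs_d n s"
  define str where "str = cc_strings n s"
  have s0: "0 < s" using s2 by simp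
  define Ki where "Ki i = {j. (i, j) \<in> K}" for i
  have Kserv: "K \<subseteq> {1..s+1} \<times> {1..d}" using K(1) s0d by (auto simp: servers_def d_def)
  have Ki_sub: "Ki i \<subseteq> {1..d}" for i using Kserv by (auto simp: Ki_def)
  have Ki_last: "Ki (s+1) \<subseteq> {1..fcrs_s0 n s}" using K(1) by (auto simp: Ki_def servers_def)
  have Ksig: "K = Sigma {1..s+1} Ki" using Kserv by (auto simp: Ki_def)
  define Cov where "Cov = {b \<in> str. \<exists>v\<in>K. b (fst v) = snd v}"
  define Unc where "Unc = {b \<in> str. \<forall>v\<in>K. b (fst v) \<noteq> snd v}"
  have Unc_eq: "Unc = PiE {1..s+1} (\<lambda>i. {1..d} - Ki i)"
    using Kserv by (auto simp: Unc_def str_def cc_strings_def d_def Ki_def PiE_iff extensional_def)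
  have fstr: "finite str" unfolding str_def by (rule fin_str)
  have card_str: "card str = d ^ (s+1)" by (simp add: str_def cc_strings_def card_PiE d_def)
  have card_Unc: "card Unc = (\<Prod>i\<in>{1..s+1}. d - card (Ki i))"
  proof -
    have "card ({1..d} - Ki i) = d - card (Ki i)" for i
      using card_Diff_subset[OF finite_subset[OF Ki_sub] Ki_sub, of i] by simp
    then show ?thesis unfolding Unc_eq by (simp add: card_PiE)
  qed
  have "Cov = str - Unc" by (auto simp: Cov_def Unc_def)
  then have card_Cov: "card Cov = d ^ (s+1) - (\<Prod>i\<in>{1..s+1}. d - card (Ki i))"
  proof -
    have "Unc \<subseteq> str" by (auto simp: Unc_def)
    then have "card (str - Unc) = card str - card Unc" using fstr by (simp add: card_Diff_subset finite_subset)
    then show ?thesis using \<open>Cov = str - Unc\<close> card_str card_Unc by simp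
  qed
  define kk where "kk = (\<lambda>i\<in>{1..s+1}. card (Ki i))"
  have kk1: "kk \<in> {1..s+1} \<rightarrow>\<^sub>E (UNIV :: nat set)" by (simp add: kk_def)
  have kk2: "(\<Sum>i\<in>{1..s+1}. kk i) = k"
  proof -
    have "card K = (\<Sum>i\<in>{1..s+1}. card (Ki i))"
      unfolding Ksig by (rule card_SigmaI) (use finite_subset[OF Ki_sub] in auto)
    then show ?thesis using K(2) by (simp add: kk_def)
  qed
  have kk3: "kk (s+1) \<le> fcrs_s0 n s"
    using card_mono[OF _ Ki_last] by (simp add: kk_def)
  have prodle: "(\<Prod>i\<in>{1..s+1}. d - card (Ki i)) \<le> d ^ (s+1)"
    using prod_le_power[of "{1..s+1}" "\<lambda>i. d - card (Ki i)" d "s+1"] k0 sk s0 k_le_d[OF k0 sk s0]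
    by (simp add: d_def)
  have "cc_m n k s \<le> int d ^ (s+1) - (\<Prod>i\<in>{1..s+1}. int d - int (kk i))"
    unfolding d_def by (rule cc_m_le[OF kk1 kk2 kk3])
  also have "(\<Prod>i\<in>{1..s+1}. int d - int (kk i)) = int (\<Prod>i\<in>{1..s+1}. d - card (Ki i))"
  proof -
    have "(\<Prod>i\<in>{1..s+1}. int d - int (kk i)) = (\<Prod>i\<in>{1..s+1}. int (d - card (Ki i)))"
    proof (rule prod.cong)
      fix i assume "i \<in> {1..s+1}"
      moreover have "card (Ki i) \<le> d" using card_mono[OF _ Ki_sub[of i]] by simp
      ultimately show "int d - int (kk i) = int (d - card (Ki i))" by (simp add: kk_def of_nat_diff)
    qed simp
    then show ?thesis by (simp add: of_nat_prod)
  qed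
  also have "int d ^ (s+1) - int (\<Prod>i\<in>{1..s+1}. d - card (Ki i)) = int (card Cov)"
    using prodle by (simp add: card_Cov of_nat_diff)
  finally have mle: "cc_m n k s \<le> int (card Cov)" .
  have mpos: "0 < cc_m n k s" by (rule cc_m_pos[OF k0 sk s0])
  obtain T where T: "T \<subseteq> Cov" "card T = nat (cc_m n k s)"
    using obtain_subset_with_card_n[of "nat (cc_m n k s)" Cov] mle by (metis nat_le_iff)
  have Tstr: "T \<subseteq> cc_strings n s" using T(1) by (auto simp: Cov_def str_def)
  have "is_fun_of P id (\<lambda>f. \<lambda>b\<in>T. enc f b)"
    using MDS Tstr T(2) mpos unfolding is_MDS_def by auto
  moreover have "is_fun_of P (\<lambda>f. \<lambda>b\<in>T. enc f b) (\<lambda>f. \<lambda>v\<in>K. cc_X n s enc v f)"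
    unfolding is_fun_of_def
  proof (intro exI[of _ "\<lambda>F. \<lambda>b\<in>T. F (SOME v. v \<in> K \<and> b (fst v) = snd v) b"] ballI)
    fix f
    show "(\<lambda>b\<in>T. enc f b) = (\<lambda>b\<in>T. (\<lambda>v\<in>K. cc_X n s enc v f) (SOME v. v \<in> K \<and> b (fst v) = snd v) b)"
    proof (rule restrict_ext)
      fix b assume b: "b \<in> T"
      then have "\<exists>v. v \<in> K \<and> b (fst v) = snd v" using T(1) unfolding Cov_def by blast
      then have sv: "(SOME v. v \<in> K \<and> b (fst v) = snd v) \<in> K \<and> b (fst (SOME v. v \<in> K \<and> b (fst v) = snd v)) = snd (SOME v. v \<in> K \<and> b (fst v) = snd v)"
        by (rule someI_ex)
      show "enc f b = (\<lambda>v\<in>K. cc_X n s enc v f) (SOME v. v \<in> K \<and> b (fst v) = snd v) b"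
        using sv b Tstr by (auto simp: cc_X_def)
    qed
  qed
  ultimately show ?thesis by (rule is_fun_of_trans)
qed

lemma part2:
  fixes P :: "'g pmf" and enc :: "'g \<Rightarrow> (nat \<Rightarrow> nat) \<Rightarrow> 'c"
  assumes k0: "0 < k" and s2: "2 \<le> s" and sk: "s \<le> n div k" and s0d: "fcrs_s0 n s < fcrs_d n s"
    and MDS: "is_MDS n k s P enc"
  shows "fcrs_rbt n k s P (cc_X n s enc) (cc_Y n s enc)
            (real (fcrs_d n s) ^ s * ent P id / real_of_int (cc_m n k s))
            (real (fcrs_d n s) ^ (s - 1) * ent P id / real_of_int (cc_m n k s))
       \<and> real (fcrs_d n s) * (real (fcrs_d n s) ^ (s - 1) * ent P id / real_of_int (cc_m n k s)) = gamma_cc n k s (ent P id)"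
proof -
  define d where "d = fcrs_d n s"
  define M where "M = ent P id"
  define m where "m = real_of_int (cc_m n k s)"
  have s0: "0 < s" using s2 by simp
  have fin: "finite (set_pmf P)" using MDS by (simp add: is_MDS_def)
  have m0: "0 < m" using cc_m_pos[OF k0 sk s0] by (simp add: m_def)
  have M0: "0 \<le> M" unfolding M_def by (rule ent_nonneg[OF fin])
  have sym: "\<And>b. b \<in> cc_strings n s \<Longrightarrow> ent P (\<lambda>f. enc f b) \<le> M / m"
    using MDS by (simp add: is_MDS_def M_def m_def)
  have serv: "r \<in> {1..s+1} \<and> l \<in> {1..d}" if "(r, l) \<in> servers n s" for r l
    using that s0d by (auto simp: servers_def d_def)
  have ent_set: "ent P (\<lambda>f. \<lambda>b\<in>A. enc f b) \<le> real (card A) * (M / m)" if "A \<subseteq> cc_strings n s" for A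
    by (rule ent_restrict_le[OF fin finite_subset[OF that fin_str]]) (use sym that in auto)
  have X_eq: "cc_X n s enc v = (\<lambda>f. \<lambda>b\<in>{b \<in> cc_strings n s. b (fst v) = snd v}. enc f b)" for v
    by (simp add: fun_eq_iff cc_X_def)
  have Y_eq: "cc_Y n s enc r l i j = (\<lambda>f. \<lambda>b\<in>{b \<in> cc_strings n s. b i = j \<and> b r = l}. enc f b)" for r l i j
    by (simp add: fun_eq_iff cc_Y_def)
  have A1: "ent P (cc_X n s enc v) \<le> real d ^ s * M / m" if v: "v \<in> servers n s" for v
  proof -
    obtain r l where v': "v = (r, l)" by force
    have "ent P (cc_X n s enc v) \<le> real (card {b \<in> cc_strings n s. b (fst v) = snd v}) * (M / m)"
      unfolding X_eq by (rule ent_set) auto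
    also have "card {b \<in> cc_strings n s. b (fst v) = snd v} = d ^ s"
      using card_str1[of r s l n] serv[of r l] v v' by (simp add: d_def)
    finally show ?thesis by simp
  qed
  have A2: "ent P (cc_Y n s enc r l i j) \<le> real d ^ (s - 1) * M / m"
    if "(r, l) \<in> servers n s" "i \<in> {1..s}" "i \<noteq> r" "j \<in> {1..d}" for r l i j
  proof -
    have "ent P (cc_Y n s enc r l i j) \<le> real (card {b \<in> cc_strings n s. b i = j \<and> b r = l}) * (M / m)"
      unfolding Y_eq by (rule ent_set) auto
    also have "card {b \<in> cc_strings n s. b i = j \<and> b r = l} = d ^ (s - 1)"
      using card_str2[of i s r j n l] serv[of r l] that by (simp add: d_def)
    finally show ?thesis by simp
  qed
  have R: "(\<forall>j\<in>{1..d}. is_fun_of P (cc_Y n s enc r l i j) (cc_X n s enc (i, j)) \<and> ent P (cc_Y n s enc r l i j) \<le> real d ^ (s - 1) * M / m) \<and>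
        is_fun_of P (cc_X n s enc (r, l)) (\<lambda>f. \<lambda>j\<in>{1..d}. cc_Y n s enc r l i j f)"
    if rl: "(r, l) \<in> servers n s" and i: "i \<in> {1..s}" "i \<noteq> r" for r l i
  proof (intro conjI ballI)
    fix j assume j: "j \<in> {1..d}"
    show "ent P (cc_Y n s enc r l i j) \<le> real d ^ (s - 1) * M / m" by (rule A2[OF rl i j])
    show "is_fun_of P (cc_Y n s enc r l i j) (cc_X n s enc (i, j))"
      unfolding is_fun_of_def
      by (intro exI[of _ "\<lambda>F. restrict F {b \<in> cc_strings n s. b i = j \<and> b r = l}"] ballI)
        (auto simp: cc_X_def cc_Y_def fun_eq_iff)
  next
    show "is_fun_of P (cc_X n s enc (r, l)) (\<lambda>f. \<lambda>j\<in>{1..d}. cc_Y n s enc r l i j f)"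
      unfolding is_fun_of_def
    proof (intro exI[of _ "\<lambda>F. \<lambda>b\<in>{b \<in> cc_strings n s. b r = l}. F (b i) b"] ballI)
      fix f
      have bi: "b i \<in> {1..d}" if "b \<in> cc_strings n s" for b
        using that i by (auto simp: cc_strings_def d_def PiE_iff)
      show "cc_X n s enc (r, l) f = (\<lambda>b\<in>{b \<in> cc_strings n s. b r = l}. (\<lambda>j\<in>{1..d}. cc_Y n s enc r l i j f) (b i) b)"
        using bi by (auto simp: cc_X_def cc_Y_def fun_eq_iff)
    qed
  qed
  have RBT: "cond_ent P (\<lambda>f. \<lambda>j\<in>{1..d}. cc_Y n s enc r l i j f) (cc_X n s enc (r, l)) = 0" for r l i
  proof -
    have "is_fun_of P (\<lambda>f. \<lambda>j\<in>{1..d}. cc_Y n s enc r l i j f) (cc_X n s enc (r, l))"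
      unfolding is_fun_of_def
      by (intro exI[of _ "\<lambda>F. \<lambda>j\<in>{1..d}. restrict F {b \<in> cc_strings n s. b i = j \<and> b r = l}"] ballI)
        (auto simp: cc_X_def cc_Y_def fun_eq_iff)
    then show ?thesis unfolding cond_ent_def by (simp add: ent_fun_pair[OF fin])
  qed
  have DR: "\<forall>K. K \<subseteq> servers n s \<and> card K = k \<longrightarrow> is_fun_of P id (\<lambda>f. \<lambda>v\<in>K. cc_X n s enc v f)"
    using cover[OF k0 s2 sk s0d _ _ MDS] by blast
  have "fcrs_rbt n k s P (cc_X n s enc) (cc_Y n s enc) (real d ^ s * M / m) (real d ^ (s - 1) * M / m)"
    unfolding fcrs_rbt_def fcrs_def d_def[symmetric]
    using fin A1 DR R RBT by blast
  moreover have "real d * (real d ^ (s - 1) * M / m) = gamma_cc n k s M"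
  proof -
    have "real d * real d ^ (s - 1) = real d ^ s" using s0 by (simp add: power_eq_if)
    then show ?thesis by (simp add: gamma_cc_def d_def m_def)
  qed
  ultimately show ?thesis by (simp add: d_def M_def m_def)
qed

lemma interp_mod:
  fixes p :: int
  assumes pr: "prime p" and fA: "finite A" and A: "\<And>x. x \<in> A \<Longrightarrow> 0 \<le> x \<and> x < p"
    and Q: "Q = 0 \<or> degree Q < card A" and z: "\<And>x. x \<in> A \<Longrightarrow> p dvd poly Q x"
  shows "\<exists>Q'. Q = smult p Q'"
  using fA A Q z
proof (induction A arbitrary: Q rule: finite_induct)
  case empty then show ?case by (intro exI[of _ 0]) simp
next
  case (insert x A)
  define R where "R = synthetic_div Q x"
  have QR: "Q = [:-x, 1:] * R + [:poly Q x:]" unfolding R_def by (rule synthetic_div_correct'[symmetric])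
  have px: "p dvd poly Q x" using insert by simp
  have R: "R = 0 \<or> degree R < card A"
  proof (cases "Q = 0")
    case True then show ?thesis by (simp add: R_def)
  next
    case False
    then have "degree Q < Suc (card A)" using insert by simp
    show ?thesis
    proof (cases "degree Q = 0")
      case True then show ?thesis by (simp add: R_def synthetic_div_eq_0_iff)
    next
      case False then show ?thesis using \<open>degree Q < Suc (card A)\<close> by (auto simp: R_def degree_synthetic_div)
    qed
  qed
  have Rdvd: "p dvd poly R y" if y: "y \<in> A" for y
  proof -
    have "poly Q y = poly ([:-x, 1:] * R + [:poly Q x:]) y" by (rule arg_cong[where f="\<lambda>q. poly q y", OF QR])
    then have "(y - x) * poly R y = poly Q y - poly Q x" by (simp add: algebra_simps)
    moreover have "p dvd poly Q y" using insert y by simp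
    ultimately have "p dvd (y - x) * poly R y" using px by (simp add: dvd_diff)
    moreover have "\<not> p dvd (y - x)"
    proof
      assume "p dvd (y - x)"
      moreover have "y \<noteq> x" using insert y by auto
      moreover have "\<bar>y - x\<bar> < p"
      proof -
        have "0 \<le> y \<and> y < p" "0 \<le> x \<and> x < p" using insert.prems(1) y by auto
        then show ?thesis by linarith
      qed
      moreover have "y - x \<noteq> 0" using \<open>y \<noteq> x\<close> by simp
      ultimately have "\<bar>p\<bar> \<le> \<bar>y - x\<bar>" using dvd_imp_le_int by blast
      then show False using \<open>\<bar>y - x\<bar> < p\<close> by simp
    qed
    ultimately show ?thesis using pr by (simp add: prime_dvd_mult_iff)
  qed
  have "\<exists>R'. R = smult p R'"
  proof (rule insert.IH)
    show "\<And>x. x \<in> A \<Longrightarrow> 0 \<le> x \<and> x < p" using insert.prems(1) by simp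
  qed (use R Rdvd in auto)
  then obtain R' where R': "R = smult p R'" by blast
  obtain t where t: "poly Q x = p * t" using px by (auto simp: dvd_def)
  have "Q = smult p ([:-x, 1:] * R' + [:t:])"
    using QR by (simp add: R' t smult_add_right mult_smult_right)
  then show ?case by blast
qed

lemma ent_le_card:
  assumes fin: "finite (set_pmf P)"
  shows "ent P X \<le> log 2 (real (card (X ` set_pmf P)))"
proof -
  define M where "M = restrict_space (measure_pmf P) (set_pmf P)"
  have sp: "space M = set_pmf P" by (simp add: M_def space_restrict_space)
  have sets: "sets M = Pow (set_pmf P)"
    by (auto simp: M_def sets_restrict_space)
  have meas: "\<And>A. A \<subseteq> set_pmf P \<Longrightarrow> measure M A = measure P A"
    by (simp add: M_def measure_restrict_space)
  interpret information_space M 2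
    unfolding M_def by (intro information_space.intro prob_space_restrict_space information_space_axioms.intro)
      (auto simp: measure_pmf.emeasure_eq_1_AE AE_measure_pmf)
  have sf: "simple_function M X"
    unfolding simple_function_def sp sets using fin by auto
  have sd: "simple_distributed M X (pmf (map_pmf X P))"
  proof (rule simple_distributedI[OF sf])
    fix x assume "x \<in> X ` space M"
    show "pmf (map_pmf X P) x = measure M (X -` {x} \<inter> space M)"
      by (simp add: sp meas pmf_map measure_Int_set_pmf)
  qed simp
  have "ent P X = entropy 2 (count_space (X ` space M)) X"
    using entropy_simple_distributed[OF sd] by (simp add: ent_def sp sum_negf)
  also have "\<dots> \<le> log 2 (real (card (X ` space M)))" by (rule entropy_le_card[OF sd])
  finally show ?thesis by (simp add: sp)
qed

lemma ent_uniform: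
  assumes "finite S" "S \<noteq> {}"
  shows "ent (pmf_of_set S) id = log 2 (real (card S))"
proof -
  have "ent (pmf_of_set S) id = (\<Sum>x\<in>S. - (1 / real (card S) * log 2 (1 / real (card S))))"
    using assms by (simp add: ent_def)
  also have "\<dots> = log 2 (real (card S))"
    using assms by (simp add: log_divide)
  finally show ?thesis .
qed

lemma poly_inj:
  fixes p m :: nat and a a' :: "nat \<Rightarrow> nat" and A :: "int set"
  assumes pr: "prime p" and fA: "finite A" and cA: "card A = m"
    and A: "\<And>x. x \<in> A \<Longrightarrow> 0 \<le> x \<and> x < int p"
    and a: "\<And>e. e < m \<Longrightarrow> a e < p" and a': "\<And>e. e < m \<Longrightarrow> a' e < p"
    and eq: "\<And>x. x \<in> A \<Longrightarrow> int p dvd (\<Sum>e<m. int (a e) * x ^ e) - (\<Sum>e<m. int (a' e) * x ^ e)"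
    and e: "e < m"
  shows "a e = a' e"
proof -
  define c where "c e = int (a e) - int (a' e)" for e
  define Q where "Q = (\<Sum>e<m. monom (c e) e)"
  have polyQ: "poly Q x = (\<Sum>e<m. int (a e) * x ^ e) - (\<Sum>e<m. int (a' e) * x ^ e)" for x
    by (simp add: Q_def poly_sum poly_monom c_def sum_subtractf algebra_simps)
  have coeffQ: "coeff Q e' = c e'" if "e' < m" for e'
  proof -
    have "coeff Q e' = (\<Sum>e<m. if e = e' then c e else 0)" by (simp add: Q_def coeff_sum coeff_monom)
    also have "\<dots> = c e'" using that by (simp add: sum.delta)
    finally show ?thesis .
  qed
  have deg: "Q = 0 \<or> degree Q < card A"
  proof (cases "m = 0")
    case True then show ?thesis by (simp add: Q_def)
  next
    case False
    have "degree Q \<le> m - 1" unfolding Q_def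
      by (rule degree_sum_le) (use False in \<open>auto intro: order_trans[OF degree_monom_le]\<close>)
    then show ?thesis using False cA by auto
  qed
  have "\<exists>Q'. Q = smult (int p) Q'"
    by (rule interp_mod[OF _ fA _ deg]) (use pr A eq polyQ in auto)
  then obtain Q' where Q': "Q = smult (int p) Q'" by blast
  have "c e = int p * coeff Q' e" using coeffQ[OF e] Q' by simp
  then have "int p dvd c e" by simp
  moreover have "\<bar>c e\<bar> < int p" using a[OF e] a'[OF e] by (simp add: c_def abs_if)
  ultimately have "c e = 0" by (metis dvd_imp_le_int abs_of_nat not_le)
  then show ?thesis by (simp add: c_def)
qed

lemma part3:
  assumes k0: "0 < k" and s2: "2 \<le> s" and sk: "s \<le> n div k"
  shows "\<exists>(P :: (nat \<Rightarrow> nat) pmf) (enc :: (nat \<Rightarrow> nat) \<Rightarrow> (nat \<Rightarrow> nat) \<Rightarrow> nat).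
        is_MDS n k s P enc \<and> ent P id > 0"
proof -
  define d where "d = fcrs_d n s"
  define N where "N = d ^ (s+1)"
  define m where "m = nat (cc_m n k s)"
  have s0: "0 < s" using s2 by simp
  have mpos: "0 < cc_m n k s" by (rule cc_m_pos[OF k0 sk s0])
  have mint: "int m = cc_m n k s" using mpos by (simp add: m_def)
  have m1: "1 \<le> m" using mpos by (simp add: m_def)
  have "int m \<le> int (fcrs_d n s) ^ (s+1)" using cc_m_le_N[OF k0 sk s0] mint by simp
  then have "int m \<le> int N" unfolding N_def d_def by (simp only: of_nat_power)
  then have mN: "m \<le> N" by simp
  obtain p where pr: "prime p" and Np: "N < p" using bigger_prime by blast
  have p2: "2 \<le> p" using pr by (simp add: prime_ge_2_nat)
  define str where "str = cc_strings n s"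
  have cstr: "card str = N" by (simp add: str_def cc_strings_def card_PiE N_def d_def)
  obtain idx where idx: "bij_betw idx str {0..<N}"
    using ex_bij_betw_finite_nat[OF fin_str[of n s]] cstr by (auto simp: str_def)
  define Files where "Files = PiE {0..<m} (\<lambda>_. {0..<p})"
  have fF: "finite Files" unfolding Files_def by (rule finite_PiE) auto
  have neF: "Files \<noteq> {}" unfolding Files_def using p2 by (simp add: PiE_eq_empty_iff)
  have cF: "card Files = p ^ m" by (simp add: Files_def card_PiE)
  define P where "P = pmf_of_set Files"
  define enc where "enc a b = (\<Sum>e<m. a e * idx b ^ e) mod p" for a b
  have sP: "set_pmf P = Files" using fF neF by (simp add: P_def)
  have entid: "ent P id = real m * log 2 (real p)"
    using ent_uniform[OF fF neF] cF p2 by (simp add: P_def log_nat_power)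
  have MDS: "is_MDS n k s P enc"
    unfolding is_MDS_def
  proof (intro conjI allI ballI impI)
    show "finite (set_pmf P)" using fF by (simp add: sP)
  next
    fix b assume b: "b \<in> cc_strings n s"
    have "ent P (\<lambda>f. enc f b) \<le> log 2 (real (card ((\<lambda>f. enc f b) ` set_pmf P)))"
      by (rule ent_le_card) (use fF in \<open>simp add: sP\<close>)
    also have "\<dots> \<le> log 2 (real p)"
    proof -
      have sub: "(\<lambda>f. enc f b) ` set_pmf P \<subseteq> {0..<p}" using p2 by (auto simp: enc_def)
      have "card ((\<lambda>f. enc f b) ` set_pmf P) \<le> p" using card_mono[OF _ sub] by simp
      moreover have "0 < card ((\<lambda>f. enc f b) ` set_pmf P)" using fF neF by (simp add: sP card_gt_0_iff)
      ultimately show ?thesis by simp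
    qed
    also have "\<dots> = ent P id / real_of_int (cc_m n k s)"
      using m1 by (simp add: entid mint[symmetric])
    finally show "ent P (\<lambda>f. enc f b) \<le> ent P id / real_of_int (cc_m n k s)" .
  next
    fix T assume T: "T \<subseteq> cc_strings n s \<and> int (card T) = cc_m n k s"
    have cT: "card T = m" using T mint by simp
    define F where "F a = (\<lambda>b\<in>T. enc a b)" for a
    have inj: "inj_on F Files"
    proof (rule inj_onI)
      fix a a' assume a: "a \<in> Files" and a': "a' \<in> Files" and Fe: "F a = F a'"
      define A where "A = (\<lambda>b. int (idx b)) ` T"
      have injT: "inj_on idx T" using bij_betw_imp_inj_on[OF idx] T by (auto simp: str_def intro: inj_on_subset)
      have cA: "card A = m" unfolding A_def using injT cT by (simp add: card_image inj_on_def)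
      have fT: "finite T" using T finite_subset[OF _ fin_str] by blast
      have Abnd: "0 \<le> x \<and> x < int p" if xA: "x \<in> A" for x
      proof -
        obtain b where b: "b \<in> T" "x = int (idx b)" using xA by (auto simp: A_def)
        have "idx b < N" using bij_betwE[OF idx] b T by (auto simp: str_def)
        then show ?thesis using b Np by simp
      qed
      have eqd: "int p dvd (\<Sum>e<m. int (a e) * x ^ e) - (\<Sum>e<m. int (a' e) * x ^ e)" if xA: "x \<in> A" for x
      proof -
        obtain b where b: "b \<in> T" "x = int (idx b)" using xA by (auto simp: A_def)
        have "F a b = F a' b" using Fe by simp
        then have "enc a b = enc a' b" using b by (simp add: F_def)
        then have "int ((\<Sum>e<m. a e * idx b ^ e) mod p) = int ((\<Sum>e<m. a' e * idx b ^ e) mod p)"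
          by (simp add: enc_def)
        then have "int (\<Sum>e<m. a e * idx b ^ e) mod int p = int (\<Sum>e<m. a' e * idx b ^ e) mod int p"
          by (simp only: of_nat_mod)
        then have "int p dvd int (\<Sum>e<m. a e * idx b ^ e) - int (\<Sum>e<m. a' e * idx b ^ e)"
          by (simp only: mod_eq_dvd_iff)
        then show ?thesis using b by (simp add: of_nat_sum)
      qed
      have ab: "a e < p" "a' e < p" if "e < m" for e using a a' that by (auto simp: Files_def PiE_iff)
      show "a = a'"
      proof
        fix e show "a e = a' e"
        proof (cases "e < m")
          case True
          show ?thesis by (rule poly_inj[OF pr _ cA Abnd _ _ eqd True]) (use ab fT A_def in auto)
        next
          case False
          then show ?thesis using a a' by (auto simp: Files_def PiE_iff extensional_def)
        qed
      qed
    qed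
    show "is_fun_of P id (\<lambda>f. \<lambda>b\<in>T. enc f b)"
      unfolding is_fun_of_def
    proof (intro exI[of _ "the_inv_into Files F"] ballI)
      fix f assume "f \<in> set_pmf P"
      then have f: "f \<in> Files" by (simp add: sP)
      have "the_inv_into Files F (F f) = f" by (rule the_inv_into_f_f[OF inj f])
      then show "id f = the_inv_into Files F (\<lambda>b\<in>T. enc f b)" by (simp add: F_def)
    qed
  qed
  moreover have "0 < ent P id" using m1 p2 by (simp add: entid)
  ultimately show ?thesis by blast
qed

theorem theorem4:
  fixes n k s :: nat
  assumes "0 < n" and "0 < k" and "2 \<le> s" and "s \<le> n div k"
    and "fcrs_s0 n s < min (fcrs_d n s) s"
  shows
    \<comment> \<open>lower bound: every FCRS repair-by-transfer scheme\<close>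
    "(\<forall>(P :: 'f pmf) (X :: nat \<times> nat \<Rightarrow> 'f \<Rightarrow> 'a) (Y :: nat \<Rightarrow> nat \<Rightarrow> nat \<Rightarrow> nat \<Rightarrow> 'f \<Rightarrow> 'b) \<alpha> \<beta>.
        fcrs_rbt n k s P X Y \<alpha> \<beta> \<longrightarrow> real (fcrs_d n s) * \<beta> \<ge> gamma_cc n k s (ent P id))
     \<and> \<comment> \<open>the Cubic Code built from any (d^(s+1), m) MDS code achieves gamma_cc\<close>
     (\<forall>(P :: 'g pmf) (enc :: 'g \<Rightarrow> (nat \<Rightarrow> nat) \<Rightarrow> 'c). is_MDS n k s P enc \<longrightarrow>
        (let M = ent P id; m = real_of_int (cc_m n k s);
             \<alpha> = real (fcrs_d n s) ^ s * M / m;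
             \<beta> = real (fcrs_d n s) ^ (s - 1) * M / m
         in fcrs_rbt n k s P (cc_X n s enc) (cc_Y n s enc) \<alpha> \<beta>
            \<and> real (fcrs_d n s) * \<beta> = gamma_cc n k s M))
     \<and> \<comment> \<open>such MDS codes exist, for a file of positive entropy\<close>
     (\<exists>(P :: (nat \<Rightarrow> nat) pmf) (enc :: (nat \<Rightarrow> nat) \<Rightarrow> (nat \<Rightarrow> nat) \<Rightarrow> nat).
        is_MDS n k s P enc \<and> ent P id > 0)"
  proof -
  have k0: "0 < k" and s2: "2 \<le> s" and sk: "s \<le> n div k" using assms by auto
  have s0d: "fcrs_s0 n s < fcrs_d n s" using assms(5) by simp
  show ?thesis
  proof (intro conjI allI impI)
    fix P :: "'f pmf" and X :: "nat \<times> nat \<Rightarrow> 'f \<Rightarrow> 'a" and Y :: "nat \<Rightarrow> nat \<Rightarrow> nat \<Rightarrow> nat \<Rightarrow> 'f \<Rightarrow> 'b" and \<alpha> \<beta>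
    assume F: "fcrs_rbt n k s P X Y \<alpha> \<beta>"
    show "real (fcrs_d n s) * \<beta> \<ge> gamma_cc n k s (ent P id)" by (rule part1[OF k0 s2 sk F])
  next
    fix P :: "'g pmf" and enc :: "'g \<Rightarrow> (nat \<Rightarrow> nat) \<Rightarrow> 'c"
    assume MDS: "is_MDS n k s P enc"
    show "let M = ent P id; m = real_of_int (cc_m n k s);
             \<alpha> = real (fcrs_d n s) ^ s * M / m;
             \<beta> = real (fcrs_d n s) ^ (s - 1) * M / m
         in fcrs_rbt n k s P (cc_X n s enc) (cc_Y n s enc) \<alpha> \<beta>
            \<and> real (fcrs_d n s) * \<beta> = gamma_cc n k s M"
      unfolding Let_def by (rule part2[OF k0 s2 sk s0d MDS])
  next
    show "\<exists>(P :: (nat \<Rightarrow> nat) pmf) (enc :: (nat \<Rightarrow> nat) \<Rightarrow> (nat \<Rightarrow> nat) \<Rightarrow> nat).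
        is_MDS n k s P enc \<and> ent P id > 0" by (rule part3[OF k0 s2 sk])
  qed
qed

end
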